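(* In the setting of the context, write near $u=0$ \[ \frac{1}{\Psi(u)}=u+\sum_{k\ge1}\Psi_k\frac{u^{k+1}}{(k+1)!}. \] Then $1/\Psi$ is a Hurwitz series over $\mathbb{Z}[a_1,a_2,a_3,a_4,a_6]$, i.e. each $\Psi_k$ is a polynomial with integer coefficients in \[ a_1=\tfrac{\mu_1}{2},\quad a_2=\wp(v)=\tfrac1{12}(4\mu_2+\mu_1^2),\quad a_3=\wp'(w)=-\mu_3,\quad a_4=\tfrac12g_2,\quad a_6=4\mu_6+\mu_3^2. \]
   Context: Let $\mu_1,\dots,\mu_6\in\mathbb{C}$, $g_2=\frac1{12}(4\mu_2+\mu_1^2)^2-2(\mu_1\mu_3+2\mu_4)$, $g_3=\frac16(\mu_1\mu_3+2\mu_4)(4\mu_2+\mu_1^2)-\frac1{216}(4\mu_2+\mu_1^2)^3-4\mu_6-\mu_3^2$ with $g_2^3-27g_3^2\ne0$; $\wp,\sigma,\zeta$ are the Weierstrass functions with these invariants ($\wp'^2=4\wp^3-g_2\wp-g_3$, $\sigma$ entire odd with $\sigma(u)=u+O(u^5)$, $\zeta=\sigma'/\sigma$). Choose $v,w$ with $\wp(v)=\frac1{12}(4\mu_2+\mu_1^2)$, $\wp'(w)=-\mu_3$, $\wp'(v)\ne0$, and put $\alpha=\wp'(w)/\wp'(v)$. The generalized Baker–Akhiezer function is $\Psi(u)=\frac{\sigma(u+v)^{\frac12(1-\alpha)}\sigma(v-u)^{\frac12(1+\alpha)}}{\sigma(u)\sigma(v)}\exp((-\frac{\mu_1}{2}+\alpha\zeta(v))u)$,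 with branches chosen so that $u\Psi(u)\to1$ as $u\to0$; $1/\Psi$ is the exponential of the general Krichever genus. A Hurwitz series over a ring $A$ is a series $\sum_k\varphi_ku^k/k!$ with all $\varphi_k\in A$. *)

theory Defs
  imports "HOL-Complex_Analysis.Complex_Analysis"
begin

definition wzeta :: "(complex \<Rightarrow> complex) \<Rightarrow> complex \<Rightarrow> complex" where
  "wzeta \<sigma> u = deriv \<sigma> u / \<sigma> u"

definition wp :: "(complex \<Rightarrow> complex) \<Rightarrow> complex \<Rightarrow> complex" where
  "wp \<sigma> u = - deriv (wzeta \<sigma>) u"

text \<open>sigma is the Weierstrass sigma function with invariants g2, g3:
  entire, odd, sigma(u) = u + O(u^5), and wp satisfies wp'^2 = 4 wp^3 - g2 wp - g3.
  These properties determine sigma uniquely.\<close>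
definition weierstrass_sigma :: "complex \<Rightarrow> complex \<Rightarrow> (complex \<Rightarrow> complex) \<Rightarrow> bool" where
  "weierstrass_sigma g2 g3 \<sigma> \<longleftrightarrow>
     \<sigma> holomorphic_on UNIV \<and>
     (\<forall>u. \<sigma> (- u) = - \<sigma> u) \<and>
     (\<exists>C r. r > 0 \<and> (\<forall>u. norm u < r \<longrightarrow> norm (\<sigma> u - u) \<le> C * norm u ^ 5)) \<and>
     (\<forall>u. \<sigma> u \<noteq> 0 \<longrightarrow>
        (deriv (wp \<sigma>) u)^2 = 4 * (wp \<sigma> u)^3 - g2 * wp \<sigma> u - g3)"

definition inv_g2 :: "complex \<Rightarrow> complex \<Rightarrow> complex \<Rightarrow> complex \<Rightarrow> complex" where
  "inv_g2 \<mu>1 \<mu>2 \<mu>3 \<mu>4 = (4*\<mu>2 + \<mu>1^2)^2 / 12 - 2 * (\<mu>1*\<mu>3 + 2*\<mu>4)"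

definition inv_g3 :: "complex \<Rightarrow> complex \<Rightarrow> complex \<Rightarrow> complex \<Rightarrow> complex \<Rightarrow> complex" where
  "inv_g3 \<mu>1 \<mu>2 \<mu>3 \<mu>4 \<mu>6 =
     (\<mu>1*\<mu>3 + 2*\<mu>4) * (4*\<mu>2 + \<mu>1^2) / 6 - (4*\<mu>2 + \<mu>1^2)^3 / 216 - 4*\<mu>6 - \<mu>3^2"

text \<open>The generalized Baker--Akhiezer function, with the branch fixed so that
  u * Psi(u) tends to 1 as u tends to 0 (principal powers of sigma(v+-u)/sigma(v)).\<close>
definition gen_BA :: "(complex \<Rightarrow> complex) \<Rightarrow> complex \<Rightarrow> complex \<Rightarrow> complex \<Rightarrow> complex \<Rightarrow> complex" where
  "gen_BA \<sigma> \<mu>1 v w u =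
     (let \<alpha> = deriv (wp \<sigma>) w / deriv (wp \<sigma>) v in
      (\<sigma> (u + v) / \<sigma> v) powr ((1 - \<alpha>) / 2) * (\<sigma> (v - u) / \<sigma> v) powr ((1 + \<alpha>) / 2)
        / \<sigma> u * exp ((- \<mu>1 / 2 + \<alpha> * wzeta \<sigma> v) * u))"

text \<open>Psi_k: the (k+1)-st derivative at 0 of 1/Psi (which vanishes at 0; note 1/0 = 0).\<close>
definition BA_coeff :: "(complex \<Rightarrow> complex) \<Rightarrow> complex \<Rightarrow> complex \<Rightarrow> complex \<Rightarrow> nat \<Rightarrow> complex" where
  "BA_coeff \<sigma> \<mu>1 v w k = (deriv ^^ (k + 1)) (\<lambda>u. 1 / gen_BA \<sigma> \<mu>1 v w u) 0"

definition zpoly5_eval :: "(nat\<times>nat\<times>nat\<times>nat\<times>nat) set \<Rightarrow> (nat\<times>nat\<times>nat\<times>nat\<times>nat \<Rightarrow> int)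
    \<Rightarrow> complex \<Rightarrow> complex \<Rightarrow> complex \<Rightarrow> complex \<Rightarrow> complex \<Rightarrow> complex" where
  "zpoly5_eval S c x1 x2 x3 x4 x6 =
     (\<Sum>(i,j,l,m,n)\<in>S. of_int (c (i,j,l,m,n)) * x1^i * x2^j * x3^l * x4^m * x6^n)"

end

theory Submission
  imports Defs
begin


type_synonym cv = "complex \<times> complex \<times> complex \<times> complex \<times> complex"
type_synonym ex5 = "nat \<times> nat \<times> nat \<times> nat \<times> nat"

definition mon :: "ex5 \<Rightarrow> cv \<Rightarrow> complex" where
  "mon e x = (case e of (i,j,l,m,n) \<Rightarrow> case x of (x1,x2,x3,x4,x6) \<Rightarrow> x1^i*x2^j*x3^l*x4^m*x6^n)"

definition tadd :: "ex5 \<Rightarrow> ex5 \<Rightarrow> ex5" where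
  "tadd e e' = (case e of (i,j,l,m,n) \<Rightarrow> case e' of (i',j',l',m',n') \<Rightarrow> (i+i',j+j',l+l',m+m',n+n'))"

lemma mon_tadd: "mon (tadd e e') x = mon e x * mon e' x"
  by (cases e; cases e'; cases x) (simp add: mon_def tadd_def power_add)

lemma zpoly5_eval_alt:
  "zpoly5_eval S c x1 x2 x3 x4 x6 = (\<Sum>e\<in>S. of_int (c e) * mon e (x1,x2,x3,x4,x6))"
  unfolding zpoly5_eval_def mon_def by (rule sum.cong) (auto simp: mult.assoc)

definition zp :: "(cv \<Rightarrow> complex) \<Rightarrow> bool" where
  "zp P \<longleftrightarrow> (\<exists>S c. finite S \<and> (\<forall>x. P x = (\<Sum>e\<in>S. of_int (c e) * mon e x)))"

lemma zp_const: "zp (\<lambda>x. of_int k)"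
  unfolding zp_def by (rule exI[of _ "{(0,0,0,0,0)}"], rule exI[of _ "\<lambda>_. k"]) (auto simp: mon_def)

lemma zp_mon: "zp (mon e)"
  unfolding zp_def by (rule exI[of _ "{e}"], rule exI[of _ "\<lambda>_. 1"]) auto

lemma zp_add:
  assumes "zp P1" "zp P2" shows "zp (\<lambda>x. P1 x + P2 x)"
proof -
  obtain S1 c1 where S1: "finite S1" "\<And>x. P1 x = (\<Sum>e\<in>S1. of_int (c1 e) * mon e x)"
    using assms(1) unfolding zp_def by blast
  obtain S2 c2 where S2: "finite S2" "\<And>x. P2 x = (\<Sum>e\<in>S2. of_int (c2 e) * mon e x)"
    using assms(2) unfolding zp_def by blast
  define c where "c e = (if e \<in> S1 then c1 e else 0) + (if e \<in> S2 then c2 e else 0)" for e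
  have fin: "finite (S1 \<union> S2)" using S1 S2 by auto
  have "P1 x + P2 x = (\<Sum>e\<in>S1 \<union> S2. of_int (c e) * mon e x)" for x
  proof -
    have a: "(\<Sum>e\<in>S1 \<union> S2. (if e \<in> S1 then of_int (c1 e) * mon e x else 0)) = P1 x"
      unfolding S1(2) using fin by (subst sum.inter_restrict[symmetric]) (auto intro: sum.cong)
    have b: "(\<Sum>e\<in>S1 \<union> S2. (if e \<in> S2 then of_int (c2 e) * mon e x else 0)) = P2 x"
      unfolding S2(2) using fin by (subst sum.inter_restrict[symmetric]) (auto intro: sum.cong)
    show ?thesis unfolding a[symmetric] b[symmetric] sum.distrib[symmetric]
      by (rule sum.cong) (auto simp: c_def distrib_right)
  qed
  then show ?thesis unfolding zp_def using fin by blast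
qed

lemma zp_mult:
  assumes "zp P1" "zp P2" shows "zp (\<lambda>x. P1 x * P2 x)"
proof -
  obtain S1 c1 where S1: "finite S1" "\<And>x. P1 x = (\<Sum>e\<in>S1. of_int (c1 e) * mon e x)"
    using assms(1) unfolding zp_def by blast
  obtain S2 c2 where S2: "finite S2" "\<And>x. P2 x = (\<Sum>e\<in>S2. of_int (c2 e) * mon e x)"
    using assms(2) unfolding zp_def by blast
  define g where "g p = tadd (fst p) (snd p)" for p
  define T where "T = g ` (S1 \<times> S2)"
  define c where "c t = (\<Sum>p\<in>{p. p \<in> S1 \<times> S2 \<and> g p = t}. c1 (fst p) * c2 (snd p))" for t
  have finT: "finite T" using S1 S2 by (simp add: T_def)
  have "P1 x * P2 x = (\<Sum>t\<in>T. of_int (c t) * mon t x)" for x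
  proof -
    define h where "h p = of_int (c1 (fst p)) * of_int (c2 (snd p)) * mon (g p) x" for p
    have "(\<Sum>t\<in>T. of_int (c t) * mon t x) = (\<Sum>t\<in>T. \<Sum>p\<in>{p. p \<in> S1 \<times> S2 \<and> g p = t}. h p)"
      unfolding c_def h_def by (auto simp: sum_distrib_right intro!: sum.cong)
    also have "\<dots> = (\<Sum>p\<in>S1 \<times> S2. h p)"
      by (rule sum.group) (use S1 S2 finT in \<open>auto simp: T_def\<close>)
    also have "\<dots> = (\<Sum>e1\<in>S1. \<Sum>e2\<in>S2. h (e1,e2))"
      by (simp add: sum.cartesian_product split_beta)
    also have "\<dots> = P1 x * P2 x"
      unfolding S1(2) S2(2) sum_product h_def g_def by (auto simp: mon_tadd intro!: sum.cong)
    finally show ?thesis by simp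
  qed
  then show ?thesis unfolding zp_def using finT by blast
qed

lemma zp_sum:
  assumes "finite I" "\<And>i. i \<in> I \<Longrightarrow> zp (P i)" shows "zp (\<lambda>x. \<Sum>i\<in>I. P i x)"
  using assms
proof (induction I rule: finite_induct)
  case empty then show ?case using zp_const[of 0] by simp
next
  case (insert i I) then show ?case by (simp add: zp_add)
qed

lemma zp_of_nat: "zp (\<lambda>x. of_nat k)" using zp_const[of "int k"] by simp
lemma zp_cmult: "zp P \<Longrightarrow> zp (\<lambda>x. of_int k * P x)" using zp_mult[OF zp_const] by blast
lemma zp_diff: "zp P1 \<Longrightarrow> zp P2 \<Longrightarrow> zp (\<lambda>x. P1 x - P2 x)"
  using zp_add[of P1 "\<lambda>x. of_int (-1) * P2 x"] zp_cmult[of P2 "-1"] by simp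
lemma zp_zero: "zp (\<lambda>x. 0)" using zp_const[of 0] by simp
lemma zp_one: "zp (\<lambda>x. 1)" using zp_const[of 1] by simp
lemma zp_x1: "zp (\<lambda>x. fst x)"
proof -
  have "mon (1,0,0,0,0) = (\<lambda>x. fst x)" by (rule ext) (auto simp: mon_def split: prod.splits)
  then show ?thesis using zp_mon by metis
qed
lemma zp_x2: "zp (\<lambda>x. fst (snd x))"
proof -
  have "mon (0,1,0,0,0) = (\<lambda>x. fst (snd x))" by (rule ext) (auto simp: mon_def split: prod.splits)
  then show ?thesis using zp_mon by metis
qed
lemma zp_x3: "zp (\<lambda>x. fst (snd (snd x)))"
proof -
  have "mon (0,0,1,0,0) = (\<lambda>x. fst (snd (snd x)))" by (rule ext) (auto simp: mon_def split: prod.splits)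
  then show ?thesis using zp_mon by metis
qed
lemma zp_x4: "zp (\<lambda>x. fst (snd (snd (snd x))))"
proof -
  have "mon (0,0,0,1,0) = (\<lambda>x. fst (snd (snd (snd x))))" by (rule ext) (auto simp: mon_def split: prod.splits)
  then show ?thesis using zp_mon by metis
qed
lemma zp_x6: "zp (\<lambda>x. snd (snd (snd (snd x))))"
proof -
  have "mon (0,0,0,0,1) = (\<lambda>x. snd (snd (snd (snd x))))" by (rule ext) (auto simp: mon_def split: prod.splits)
  then show ?thesis using zp_mon by metis
qed

datatype ex = Vr nat | Cs "cv \<Rightarrow> complex" | Pl ex ex | Ml ex ex

fun ev :: "ex \<Rightarrow> (nat \<Rightarrow> complex \<Rightarrow> complex) \<Rightarrow> cv \<Rightarrow> complex \<Rightarrow> complex" where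
  "ev (Vr i) y a z = y i z"
| "ev (Cs P) y a z = P a"
| "ev (Pl e1 e2) y a z = ev e1 y a z + ev e2 y a z"
| "ev (Ml e1 e2) y a z = ev e1 y a z * ev e2 y a z"

fun okx :: "ex \<Rightarrow> bool" where
  "okx (Vr i) = True"
| "okx (Cs P) = zp P"
| "okx (Pl e1 e2) = (okx e1 \<and> okx e2)"
| "okx (Ml e1 e2) = (okx e1 \<and> okx e2)"

lemma ev_fun: "ev (Vr i) y a = y i" "ev (Cs P) y a = (\<lambda>z. P a)"
  "ev (Pl e1 e2) y a = (\<lambda>z. ev e1 y a z + ev e2 y a z)" "ev (Ml e1 e2) y a = (\<lambda>z. ev e1 y a z * ev e2 y a z)"
  by (auto simp: fun_eq_iff)

lemma ev_holo: "(\<And>i. y i holomorphic_on S) \<Longrightarrow> (\<lambda>z. ev e y a z) holomorphic_on S"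
  by (induction e) (auto intro!: holomorphic_intros simp: ev_fun)

lemma ev_der:
  assumes "okx e"
    and hol: "\<And>\<iota>. Inst \<iota> \<Longrightarrow> \<exists>r>0. \<forall>i. Y \<iota> i holomorphic_on ball 0 r"
    and hyp: "\<And>m i. m \<le> n \<Longrightarrow> \<exists>P. zp P \<and> (\<forall>\<iota>. Inst \<iota> \<longrightarrow> (deriv^^m) (Y \<iota> i) 0 = P (A \<iota>))"
  shows "\<exists>P. zp P \<and> (\<forall>\<iota>. Inst \<iota> \<longrightarrow> (deriv^^n) (\<lambda>z. ev e (Y \<iota>) (A \<iota>) z) 0 = P (A \<iota>))"
  using assms(1) hyp
proof (induction e arbitrary: n)
  case (Vr i)
  then show ?case by simp
next
  case (Cs P)
  show ?case
    by (rule exI[of _ "\<lambda>x. if n = 0 then P x else 0"]) (use Cs in \<open>cases "n = 0"; auto simp: zp_zero\<close>)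
next
  case (Pl e1 e2)
  obtain P1 where P1: "zp P1" "\<forall>\<iota>. Inst \<iota> \<longrightarrow> (deriv^^n) (\<lambda>z. ev e1 (Y \<iota>) (A \<iota>) z) 0 = P1 (A \<iota>)"
  proof -
    have "\<exists>P. zp P \<and> (\<forall>\<iota>. Inst \<iota> \<longrightarrow> (deriv^^n) (\<lambda>z. ev e1 (Y \<iota>) (A \<iota>) z) 0 = P (A \<iota>))"
      by (rule Pl.IH(1)) (use Pl.prems in auto)
    then show ?thesis using that by blast
  qed
  obtain P2 where P2: "zp P2" "\<forall>\<iota>. Inst \<iota> \<longrightarrow> (deriv^^n) (\<lambda>z. ev e2 (Y \<iota>) (A \<iota>) z) 0 = P2 (A \<iota>)"
  proof -
    have "\<exists>P. zp P \<and> (\<forall>\<iota>. Inst \<iota> \<longrightarrow> (deriv^^n) (\<lambda>z. ev e2 (Y \<iota>) (A \<iota>) z) 0 = P (A \<iota>))"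
      by (rule Pl.IH(2)) (use Pl.prems in auto)
    then show ?thesis using that by blast
  qed
  show ?case
  proof (intro exI conjI allI impI)
    show "zp (\<lambda>x. P1 x + P2 x)" using P1 P2 zp_add by blast
    fix \<iota> assume I: "Inst \<iota>"
    obtain r where r: "r > 0" "\<forall>i. Y \<iota> i holomorphic_on ball 0 r" using hol[OF I] by blast
    have "(deriv^^n) (\<lambda>z. ev (Pl e1 e2) (Y \<iota>) (A \<iota>) z) 0
        = (deriv^^n) (\<lambda>z. ev e1 (Y \<iota>) (A \<iota>) z) 0 + (deriv^^n) (\<lambda>z. ev e2 (Y \<iota>) (A \<iota>) z) 0"
    proof -
      have h1: "(\<lambda>z. ev e1 (Y \<iota>) (A \<iota>) z) holomorphic_on ball 0 r" by (rule ev_holo) (use r in blast)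
      have h2: "(\<lambda>z. ev e2 (Y \<iota>) (A \<iota>) z) holomorphic_on ball 0 r" by (rule ev_holo) (use r in blast)
      have "(deriv^^n) (\<lambda>z. ev e1 (Y \<iota>) (A \<iota>) z + ev e2 (Y \<iota>) (A \<iota>) z) 0 = (deriv^^n) (\<lambda>z. ev e1 (Y \<iota>) (A \<iota>) z) 0 + (deriv^^n) (\<lambda>z. ev e2 (Y \<iota>) (A \<iota>) z) 0"
        by (rule higher_deriv_add[OF h1 h2]) (use r in auto)
      then show ?thesis by simp
    qed
    then show "(deriv^^n) (\<lambda>z. ev (Pl e1 e2) (Y \<iota>) (A \<iota>) z) 0 = P1 (A \<iota>) + P2 (A \<iota>)"
      using P1 P2 I by simp
  qed
next
  case (Ml e1 e2)
  have "\<forall>j. \<exists>P. j \<le> n \<longrightarrow> zp P \<and> (\<forall>\<iota>. Inst \<iota> \<longrightarrow> (deriv^^j) (\<lambda>z. ev e1 (Y \<iota>) (A \<iota>) z) 0 = P (A \<iota>))"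
  proof
    fix j show "\<exists>P. j \<le> n \<longrightarrow> zp P \<and> (\<forall>\<iota>. Inst \<iota> \<longrightarrow> (deriv^^j) (\<lambda>z. ev e1 (Y \<iota>) (A \<iota>) z) 0 = P (A \<iota>))"
    proof (cases "j \<le> n")
      case True
      have "\<exists>P. zp P \<and> (\<forall>\<iota>. Inst \<iota> \<longrightarrow> (deriv^^j) (\<lambda>z. ev e1 (Y \<iota>) (A \<iota>) z) 0 = P (A \<iota>))"
      proof (rule Ml.IH(1))
        show "okx e1" using Ml.prems(1) by simp
        fix m i assume "m \<le> j"
        then show "\<exists>P. zp P \<and> (\<forall>\<iota>. Inst \<iota> \<longrightarrow> (deriv^^m) (Y \<iota> i) 0 = P (A \<iota>))"
          using Ml.prems(2)[of m i] True by simp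
      qed
      then show ?thesis by blast
    qed auto
  qed
  from choice[OF this] obtain P1 where P1: "\<forall>j. j \<le> n \<longrightarrow> zp (P1 j) \<and> (\<forall>\<iota>. Inst \<iota> \<longrightarrow> (deriv^^j) (\<lambda>z. ev e1 (Y \<iota>) (A \<iota>) z) 0 = P1 j (A \<iota>))"
    by blast
  have "\<forall>j. \<exists>P. j \<le> n \<longrightarrow> zp P \<and> (\<forall>\<iota>. Inst \<iota> \<longrightarrow> (deriv^^j) (\<lambda>z. ev e2 (Y \<iota>) (A \<iota>) z) 0 = P (A \<iota>))"
  proof
    fix j show "\<exists>P. j \<le> n \<longrightarrow> zp P \<and> (\<forall>\<iota>. Inst \<iota> \<longrightarrow> (deriv^^j) (\<lambda>z. ev e2 (Y \<iota>) (A \<iota>) z) 0 = P (A \<iota>))"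
    proof (cases "j \<le> n")
      case True
      have "\<exists>P. zp P \<and> (\<forall>\<iota>. Inst \<iota> \<longrightarrow> (deriv^^j) (\<lambda>z. ev e2 (Y \<iota>) (A \<iota>) z) 0 = P (A \<iota>))"
      proof (rule Ml.IH(2))
        show "okx e2" using Ml.prems(1) by simp
        fix m i assume "m \<le> j"
        then show "\<exists>P. zp P \<and> (\<forall>\<iota>. Inst \<iota> \<longrightarrow> (deriv^^m) (Y \<iota> i) 0 = P (A \<iota>))"
          using Ml.prems(2)[of m i] True by simp
      qed
      then show ?thesis by blast
    qed auto
  qed
  from choice[OF this] obtain P2 where P2: "\<forall>j. j \<le> n \<longrightarrow> zp (P2 j) \<and> (\<forall>\<iota>. Inst \<iota> \<longrightarrow> (deriv^^j) (\<lambda>z. ev e2 (Y \<iota>) (A \<iota>) z) 0 = P2 j (A \<iota>))"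
    by blast
  show ?case
  proof (intro exI conjI allI impI)
    show "zp (\<lambda>x. \<Sum>i = 0..n. of_nat (n choose i) * P1 i x * P2 (n-i) x)"
    proof (rule zp_sum)
      fix i assume "i \<in> {0..n}"
      then have a: "zp (P1 i)" "zp (P2 (n-i))" using P1 P2 by auto
      show "zp (\<lambda>x. of_nat (n choose i) * P1 i x * P2 (n - i) x)"
        using zp_mult[OF zp_mult[OF zp_of_nat a(1)] a(2)] by simp
    qed simp
    fix \<iota> assume I: "Inst \<iota>"
    obtain r where r: "r > 0" "\<forall>i. Y \<iota> i holomorphic_on ball 0 r" using hol[OF I] by blast
    have "(deriv^^n) (\<lambda>z. ev (Ml e1 e2) (Y \<iota>) (A \<iota>) z) 0
        = (\<Sum>i = 0..n. of_nat (n choose i) * (deriv^^i) (\<lambda>z. ev e1 (Y \<iota>) (A \<iota>) z) 0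
              * (deriv^^(n-i)) (\<lambda>z. ev e2 (Y \<iota>) (A \<iota>) z) 0)"
    proof -
      have h1: "(\<lambda>z. ev e1 (Y \<iota>) (A \<iota>) z) holomorphic_on ball 0 r" by (rule ev_holo) (use r in blast)
      have h2: "(\<lambda>z. ev e2 (Y \<iota>) (A \<iota>) z) holomorphic_on ball 0 r" by (rule ev_holo) (use r in blast)
      have "(deriv^^n) (\<lambda>z. ev e1 (Y \<iota>) (A \<iota>) z * ev e2 (Y \<iota>) (A \<iota>) z) 0 = (\<Sum>i = 0..n. of_nat (n choose i) * (deriv^^i) (\<lambda>z. ev e1 (Y \<iota>) (A \<iota>) z) 0
              * (deriv^^(n-i)) (\<lambda>z. ev e2 (Y \<iota>) (A \<iota>) z) 0)"
        by (rule higher_deriv_mult[OF h1 h2]) (use r in auto)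
      then show ?thesis by simp
    qed
    also have "\<dots> = (\<Sum>i = 0..n. of_nat (n choose i) * P1 i (A \<iota>) * P2 (n-i) (A \<iota>))"
    proof (rule sum.cong[OF refl])
      fix i assume "i \<in> {0..n}"
      then have i: "i \<le> n" "n - i \<le> n" by auto
      have "(deriv^^i) (\<lambda>z. ev e1 (Y \<iota>) (A \<iota>) z) 0 = P1 i (A \<iota>)" using P1 i(1) I by blast
      moreover have "(deriv^^(n-i)) (\<lambda>z. ev e2 (Y \<iota>) (A \<iota>) z) 0 = P2 (n-i) (A \<iota>)" using P2 i(2) I by blast
      ultimately show "of_nat (n choose i) * (deriv^^i) (\<lambda>z. ev e1 (Y \<iota>) (A \<iota>) z) 0
              * (deriv^^(n-i)) (\<lambda>z. ev e2 (Y \<iota>) (A \<iota>) z) 0 = of_nat (n choose i) * P1 i (A \<iota>) * P2 (n-i) (A \<iota>)"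
        by (simp only:)
    qed
    finally show "(deriv^^n) (\<lambda>z. ev (Ml e1 e2) (Y \<iota>) (A \<iota>) z) 0 = (\<Sum>i = 0..n. of_nat (n choose i) * P1 i (A \<iota>) * P2 (n-i) (A \<iota>))" .
  qed
qed

lemma eq_on_ball_ext:
  fixes f g :: "complex \<Rightarrow> complex"
  assumes "f holomorphic_on ball 0 r" "g holomorphic_on ball 0 r" "r > 0"
    and "\<And>z. z \<in> ball 0 r - {0} \<Longrightarrow> f z = g z" and "z \<in> ball 0 r"
  shows "f z = g z"
proof (cases "z = 0")
  case False then show ?thesis using assms by auto
next
  case True
  have cf: "isCont f 0" "isCont g 0"
    using assms(1,2,3) by (auto intro!: continuous_on_interior holomorphic_on_imp_continuous_on)
  have "(f \<longlongrightarrow> f 0) (at 0)" using cf(1) isCont_def by blast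
  moreover have "eventually (\<lambda>x. f x = g x) (at 0)"
    using assms(3,4) by (auto simp: eventually_at dist_norm intro!: exI[of _ r])
  ultimately have "(g \<longlongrightarrow> f 0) (at 0)" by (rule Lim_transform_eventually)
  moreover have "(g \<longlongrightarrow> g 0) (at 0)" using cf(2) isCont_def by blast
  ultimately show ?thesis using True by (metis at_neq_bot tendsto_unique)
qed

lemma sys_int:
  assumes ok: "\<And>i. okx (E i)"
    and loc: "\<And>\<iota>. Inst \<iota> \<Longrightarrow> \<exists>r>0. (\<forall>i. Y \<iota> i holomorphic_on ball 0 r) \<and>
                 (\<forall>i. \<forall>z\<in>ball 0 r - {0}. deriv (Y \<iota> i) z = ev (E i) (Y \<iota>) (A \<iota>) z)"
    and init: "\<And>i. \<exists>P. zp P \<and> (\<forall>\<iota>. Inst \<iota> \<longrightarrow> Y \<iota> i 0 = P (A \<iota>))"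
  shows "\<exists>P. zp P \<and> (\<forall>\<iota>. Inst \<iota> \<longrightarrow> (deriv^^n) (Y \<iota> i) 0 = P (A \<iota>))"
proof -
  have hol: "\<And>\<iota>. Inst \<iota> \<Longrightarrow> \<exists>r>0. \<forall>i. Y \<iota> i holomorphic_on ball 0 r" using loc by blast
  have "\<forall>m\<le>n. \<forall>i. \<exists>P. zp P \<and> (\<forall>\<iota>. Inst \<iota> \<longrightarrow> (deriv^^m) (Y \<iota> i) 0 = P (A \<iota>))"
  proof (induction n)
    case 0 then show ?case using init by simp
  next
    case (Suc n)
    have new: "\<exists>P. zp P \<and> (\<forall>\<iota>. Inst \<iota> \<longrightarrow> (deriv^^Suc n) (Y \<iota> i) 0 = P (A \<iota>))" for i
    proof -
      have ex: "\<exists>P. zp P \<and> (\<forall>\<iota>. Inst \<iota> \<longrightarrow> (deriv^^n) (\<lambda>z. ev (E i) (Y \<iota>) (A \<iota>) z) 0 = P (A \<iota>))"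
      proof (rule ev_der[OF ok hol])
        fix m j assume "m \<le> n" then show "\<exists>P. zp P \<and> (\<forall>\<iota>. Inst \<iota> \<longrightarrow> (deriv^^m) (Y \<iota> j) 0 = P (A \<iota>))"
          using Suc.IH by blast
      qed
      obtain P where P: "zp P" "\<forall>\<iota>. Inst \<iota> \<longrightarrow> (deriv^^n) (\<lambda>z. ev (E i) (Y \<iota>) (A \<iota>) z) 0 = P (A \<iota>)"
        using ex by blast
      have "(deriv^^Suc n) (Y \<iota> i) 0 = P (A \<iota>)" if I: "Inst \<iota>" for \<iota>
      proof -
        obtain r where r: "r > 0" "\<forall>i. Y \<iota> i holomorphic_on ball 0 r"
          "\<forall>i. \<forall>z\<in>ball 0 r - {0}. deriv (Y \<iota> i) z = ev (E i) (Y \<iota>) (A \<iota>) z"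
          using loc[OF I] by blast
        have eq: "deriv (Y \<iota> i) z = ev (E i) (Y \<iota>) (A \<iota>) z" if "z \<in> ball 0 r" for z
        proof (rule eq_on_ball_ext[where f="deriv (Y \<iota> i)" and g="\<lambda>z. ev (E i) (Y \<iota>) (A \<iota>) z" and r=r and z=z])
          show "deriv (Y \<iota> i) holomorphic_on ball 0 r" using r(2) by (intro holomorphic_deriv) auto
          show "(\<lambda>z. ev (E i) (Y \<iota>) (A \<iota>) z) holomorphic_on ball 0 r" by (rule ev_holo) (use r in blast)
        qed (use r that in auto)
        have "(deriv^^Suc n) (Y \<iota> i) 0 = (deriv^^n) (deriv (Y \<iota> i)) 0"
          by (simp add: funpow_Suc_right del: funpow.simps)
        also have "\<dots> = (deriv^^n) (\<lambda>z. ev (E i) (Y \<iota>) (A \<iota>) z) 0"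
        proof (rule higher_deriv_cong_ev[OF _ refl])
          show "\<forall>\<^sub>F x in nhds 0. deriv (Y \<iota> i) x = ev (E i) (Y \<iota>) (A \<iota>) x"
            using eq r(1) by (auto simp: eventually_nhds intro!: exI[of _ "ball 0 r"])
        qed
        finally show ?thesis using P I by simp
      qed
      then show ?thesis using P by blast
    qed
    show ?case using Suc.IH new by (auto simp: le_Suc_eq)
  qed
  then show ?thesis by blast
qed


lemma isCont_ball:
  fixes f :: "complex \<Rightarrow> complex"
  assumes "isCont f a" "open S" "f a \<in> S"
  shows "\<exists>r>0. \<forall>x\<in>ball a r. f x \<in> S"
proof -
  have "(f \<longlongrightarrow> f a) (at a)" using assms(1) isCont_def by blast
  then have "eventually (\<lambda>x. f x \<in> S) (at a)"
    using assms(2,3) topological_tendstoD by blast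
  then obtain d where d: "d > 0" "\<And>x. x \<noteq> a \<Longrightarrow> dist x a < d \<Longrightarrow> f x \<in> S"
    unfolding eventually_at by blast
  show ?thesis
    using d assms(3) by (metis dist_commute mem_ball)
qed

lemma isCont_nz:
  fixes f :: "complex \<Rightarrow> complex"
  assumes "isCont f a" "f a \<noteq> 0"
  shows "\<exists>r>0. \<forall>x\<in>ball a r. f x \<noteq> 0"
  using isCont_ball[OF assms(1), of "-{0}"] assms(2) by auto

lemma div_step:
  fixes \<phi> :: "complex \<Rightarrow> complex"
  assumes hol: "\<phi> holomorphic_on UNIV" and z0: "\<phi> 0 = 0" and r: "r > 0"
    and bnd: "\<And>z. z \<noteq> 0 \<Longrightarrow> norm z < r \<Longrightarrow> norm (\<phi> z) \<le> C * norm z ^ m" and m: "m > 0"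
  obtains \<psi> where "\<psi> holomorphic_on UNIV" "\<And>z. \<phi> z = z * \<psi> z"
    "\<And>z. z \<noteq> 0 \<Longrightarrow> norm z < r \<Longrightarrow> norm (\<psi> z) \<le> C * norm z ^ (m - 1)" "m > 1 \<Longrightarrow> \<psi> 0 = 0"
proof -
  define n where "n = m - 1"
  have mn: "m = Suc n" using m by (simp add: n_def)
  define \<psi> where "\<psi> = (\<lambda>z. if z = 0 then deriv \<phi> 0 else (\<phi> z - \<phi> 0) / (z - 0))"
  have h: "\<psi> holomorphic_on UNIV" unfolding \<psi>_def by (rule pole_lemma[OF hol]) auto
  have e: "\<phi> z = z * \<psi> z" for z by (cases "z = 0") (auto simp: \<psi>_def z0)
  have b: "norm (\<psi> z) \<le> C * norm z ^ (m - 1)" if "z \<noteq> 0" "norm z < r" for z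
  proof -
    have "norm (\<phi> z) = norm z * norm (\<psi> z)" by (simp add: e norm_mult)
    then show ?thesis using bnd[OF that] that(1) by (simp add: mult_le_cancel_left_pos mn n_def[symmetric])
  qed
  have z: "\<psi> 0 = 0" if "m > 1"
  proof -
    have "n > 0" using that mn by simp
    have c: "isCont \<psi> 0" by (meson UNIV_I continuous_on_eq_continuous_at h holomorphic_on_imp_continuous_on open_UNIV)
    have A: "((\<lambda>z. norm (\<psi> z)) \<longlongrightarrow> norm (\<psi> 0)) (at 0)"
      using c isCont_def tendsto_norm by blast
    have B: "((\<lambda>z::complex. C * norm z ^ n) \<longlongrightarrow> C * norm (0::complex) ^ n) (at 0)"
      using tendsto_norm[OF tendsto_ident_at[of "0::complex" UNIV]] by (intro tendsto_intros)
    have E: "eventually (\<lambda>z. norm (\<psi> z) \<le> C * norm z ^ n) (at 0)"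
      using r b by (auto simp: eventually_at dist_norm n_def intro!: exI[of _ r])
    have "norm (\<psi> 0) \<le> C * norm (0::complex) ^ n"
      by (rule tendsto_le[OF at_neq_bot B A E])
    then show ?thesis using \<open>n > 0\<close> by (simp add: zero_power)
  qed
  show ?thesis using h e b z that by blast
qed

lemma sigma_factor:
  fixes \<sigma> :: "complex \<Rightarrow> complex"
  assumes hol: "\<sigma> holomorphic_on UNIV" and r: "r > 0"
    and bnd: "\<And>u. norm u < r \<Longrightarrow> norm (\<sigma> u - u) \<le> C * norm u ^ 5"
  shows "\<exists>h. h holomorphic_on UNIV \<and> (\<forall>u. \<sigma> u = u + u^5 * h u)"
proof -
  define g where "g = (\<lambda>u. \<sigma> u - u)"
  have gh: "g holomorphic_on UNIV" unfolding g_def by (intro holomorphic_intros hol)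
  have g0: "g 0 = 0" using bnd[of 0] r by (simp add: g_def)
  have gb: "\<And>z. z \<noteq> 0 \<Longrightarrow> norm z < r \<Longrightarrow> norm (g z) \<le> C * norm z ^ 5"
    using bnd by (simp add: g_def)
  obtain h1 where h1: "h1 holomorphic_on UNIV" "\<And>z. g z = z * h1 z"
      "\<And>z. z \<noteq> 0 \<Longrightarrow> norm z < r \<Longrightarrow> norm (h1 z) \<le> C * norm z ^ (5-1)" "h1 0 = 0"
    using div_step[OF gh g0 r gb] by auto
  obtain h2 where h2: "h2 holomorphic_on UNIV" "\<And>z. h1 z = z * h2 z"
      "\<And>z. z \<noteq> 0 \<Longrightarrow> norm z < r \<Longrightarrow> norm (h2 z) \<le> C * norm z ^ (5-1-1)" "h2 0 = 0"
    using div_step[OF h1(1) h1(4) r h1(3)] by auto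
  obtain h3 where h3: "h3 holomorphic_on UNIV" "\<And>z. h2 z = z * h3 z"
      "\<And>z. z \<noteq> 0 \<Longrightarrow> norm z < r \<Longrightarrow> norm (h3 z) \<le> C * norm z ^ (5-1-1-1)" "h3 0 = 0"
    using div_step[OF h2(1) h2(4) r h2(3)] by auto
  obtain h4 where h4: "h4 holomorphic_on UNIV" "\<And>z. h3 z = z * h4 z"
      "\<And>z. z \<noteq> 0 \<Longrightarrow> norm z < r \<Longrightarrow> norm (h4 z) \<le> C * norm z ^ (5-1-1-1-1)" "h4 0 = 0"
    using div_step[OF h3(1) h3(4) r h3(3)] by auto
  have m5: "0 < (5-1-1-1-1::nat)" by simp
  obtain h5 where h5: "h5 holomorphic_on UNIV" "\<And>z. h4 z = z * h5 z"
    using div_step[OF h4(1) h4(4) r h4(3) m5] by blast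
  have "g u = u^5 * h5 u" for u
    by (simp add: h1(2) h2(2) h3(2) h4(2) h5(2) eval_nat_numeral)
  then show ?thesis using h5(1) by (auto simp: g_def intro!: exI[of _ h5] simp: algebra_simps)
qed


lemma addpoly:
  fixes X Y P0 Q0 g2 g3 :: complex
  assumes c1: "Y^2 = 4*(X+P0)^3 - g2*(X+P0) - g3" and c2: "Q0^2 = 4*P0^3 - g2*P0 - g3"
  shows "4*X*((6*(X+P0)^2 - g2/2)*((6*(X+P0)^2 - g2/2)*X - (Y-Q0)*Y) + (Y-Q0)*(12*(X+P0)*Y*X - (Y-Q0)*(6*(X+P0)^2 - g2/2)))
     - 12*((Y-Q0)*((6*(X+P0)^2 - g2/2)*X - (Y-Q0)*Y))*Y - 8*X^4*(6*(X+P0)^2 - g2/2)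
   = 3*((Y-Q0)^2 - 4*X^2*(X+2*P0))^2 - 4*g2*X^4"
  using c1 c2 by algebra

lemma hol_isCont: "f holomorphic_on ball 0 r \<Longrightarrow> r > 0 \<Longrightarrow> isCont f (0::complex)"
  by (meson centre_in_ball continuous_on_eq_continuous_at holomorphic_on_imp_continuous_on open_ball)

lemma ode_unique:
  fixes F G :: "complex \<Rightarrow> complex"
  assumes S: "open S" "connected S" "z0 \<in> S" "w \<in> S" and hF: "F holomorphic_on S" and hG: "G holomorphic_on S"
    and oF: "\<And>z. z \<in> S \<Longrightarrow> deriv (deriv F) z = a * (F z)^2 - b"
    and oG: "\<And>z. z \<in> S \<Longrightarrow> deriv (deriv G) z = a * (G z)^2 - b"
    and i0: "F z0 = G z0" and i1: "deriv F z0 = deriv G z0"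
  shows "F w = G w"
proof -
  have key: "(deriv^^(Suc (Suc m))) H z0 = a * (\<Sum>i=0..m. of_nat (m choose i) * (deriv^^i) H z0 * (deriv^^(m-i)) H z0) - (if m = 0 then b else 0)"
    if hH: "H holomorphic_on S" and oH: "\<And>z. z \<in> S \<Longrightarrow> deriv (deriv H) z = a * (H z)^2 - b" for H m
  proof -
    have "(deriv^^(Suc (Suc m))) H z0 = (deriv^^m) (deriv (deriv H)) z0"
      by (simp add: funpow_Suc_right del: funpow.simps)
    also have "\<dots> = (deriv^^m) (\<lambda>z. a * (H z * H z) - b) z0"
      by (rule higher_deriv_cong_ev[OF _ refl]) (use S oH in \<open>auto simp: eventually_nhds power2_eq_square\<close>)
    also have "\<dots> = (deriv^^m) (\<lambda>z. a * (H z * H z)) z0 - (deriv^^m) (\<lambda>z. b) z0"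
      by (rule higher_deriv_diff) (use S hH in \<open>auto intro!: holomorphic_intros\<close>)
    also have "(deriv^^m) (\<lambda>z. a * (H z * H z)) z0 = a * (deriv^^m) (\<lambda>z. H z * H z) z0"
      by (rule higher_deriv_cmult) (use S hH in \<open>auto intro!: holomorphic_intros\<close>)
    also have "(deriv^^m) (\<lambda>z. H z * H z) z0 = (\<Sum>i=0..m. of_nat (m choose i) * (deriv^^i) H z0 * (deriv^^(m-i)) H z0)"
      by (rule higher_deriv_mult[OF hH hH S(1) S(3)])
    finally show ?thesis by simp
  qed
  have all: "(deriv^^n) F z0 = (deriv^^n) G z0" for n
  proof (induction n rule: nat_less_induct)
    case (1 n)
    show ?case
    proof (cases n)
      case 0 then show ?thesis using i0 by simp
    next
      case (Suc n1)
      show ?thesis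
      proof (cases n1)
        case 0 then show ?thesis using i1 Suc by simp
      next
        case (Suc m)
        have "(\<Sum>i=0..m. of_nat (m choose i) * (deriv^^i) F z0 * (deriv^^(m-i)) F z0)
            = (\<Sum>i=0..m. of_nat (m choose i) * (deriv^^i) G z0 * (deriv^^(m-i)) G z0)"
        proof (rule sum.cong[OF refl])
          fix i assume "i \<in> {0..m}"
          then have "i < n" "m - i < n" using Suc \<open>n = Suc n1\<close> by auto
          then show "of_nat (m choose i) * (deriv^^i) F z0 * (deriv^^(m-i)) F z0
              = of_nat (m choose i) * (deriv^^i) G z0 * (deriv^^(m-i)) G z0"
            using "1" by simp
        qed
        then show ?thesis using key[OF hF oF, of m] key[OF hG oG, of m] Suc \<open>n = Suc n1\<close> by simp
      qed
    qed
  qed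
  show ?thesis by (rule holomorphic_fun_eq_on_connected[OF hF hG S(1) S(2) all S(3) S(4)])
qed

lemma dq1:
  fixes A X :: "complex \<Rightarrow> complex"
  assumes "(A has_field_derivative A') (at x)" "(X has_field_derivative X') (at x)" "X x \<noteq> 0"
  shows "((\<lambda>x. (A x)^2/(4*(X x)^2)) has_field_derivative A x * (A' * X x - A x * X') / (2 * (X x)^3)) (at x)"
  using assms by (auto intro!: derivative_eq_intros simp: field_simps power2_eq_square power3_eq_cube)

lemma dq2:
  fixes A T X :: "complex \<Rightarrow> complex"
  assumes "(A has_field_derivative A') (at x)" "(T has_field_derivative T') (at x)"
    "(X has_field_derivative X') (at x)" "X x \<noteq> 0"
  shows "((\<lambda>x. A x * T x / (2 * (X x)^3)) has_field_derivative
           (A' * T x + A x * T')/(2*(X x)^3) - 3*(A x * T x)*X'/(2*(X x)^4)) (at x)"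
  using assms by (auto intro!: derivative_eq_intros simp: field_simps power2_eq_square power3_eq_cube eval_nat_numeral)

lemma deriv_on_open:
  fixes f g :: "complex \<Rightarrow> complex"
  shows "open S \<Longrightarrow> x \<in> S \<Longrightarrow> (\<And>y. y \<in> S \<Longrightarrow> f y = g y) \<Longrightarrow> deriv f x = deriv g x"
  by (intro deriv_cong_ev) (auto simp: eventually_nhds)

locale inst =
  fixes \<mu>1 \<mu>2 \<mu>3 \<mu>4 \<mu>6 :: complex and \<sigma> :: "complex \<Rightarrow> complex" and v w :: complex
  assumes ws: "weierstrass_sigma (inv_g2 \<mu>1 \<mu>2 \<mu>3 \<mu>4) (inv_g3 \<mu>1 \<mu>2 \<mu>3 \<mu>4 \<mu>6) \<sigma>"
    and sv: "\<sigma> v \<noteq> 0" and wpv: "wp \<sigma> v = (4*\<mu>2 + \<mu>1^2)/12" and wpw: "deriv (wp \<sigma>) w = - \<mu>3"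
    and Qnz: "deriv (wp \<sigma>) v \<noteq> 0"
begin

abbreviation "g2 \<equiv> inv_g2 \<mu>1 \<mu>2 \<mu>3 \<mu>4"
abbreviation "g3 \<equiv> inv_g3 \<mu>1 \<mu>2 \<mu>3 \<mu>4 \<mu>6"
abbreviation "Pw \<equiv> wp \<sigma>"
abbreviation "Pw1 \<equiv> deriv (wp \<sigma>)"
abbreviation "Zt \<equiv> wzeta \<sigma>"
abbreviation "U \<equiv> {u. \<sigma> u \<noteq> 0}"

lemma sig_hol: "\<sigma> holomorphic_on UNIV" using ws unfolding weierstrass_sigma_def by blast
lemma sig_curve: "\<sigma> u \<noteq> 0 \<Longrightarrow> (Pw1 u)^2 = 4*(Pw u)^3 - g2 * Pw u - g3"
  using ws unfolding weierstrass_sigma_def by blast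

lemma hh_ex: "\<exists>h. h holomorphic_on UNIV \<and> (\<forall>u. \<sigma> u = u + u^5 * h u)"
proof -
  obtain C r where "r > 0" "\<And>u. norm u < r \<Longrightarrow> norm (\<sigma> u - u) \<le> C * norm u ^ 5"
    using ws unfolding weierstrass_sigma_def by blast
  then show ?thesis using sigma_factor[OF sig_hol] by blast
qed

definition "hh = (SOME h. h holomorphic_on UNIV \<and> (\<forall>u. \<sigma> u = u + u^5 * h u))"
lemma hh: "hh holomorphic_on UNIV" "\<sigma> u = u + u^5 * hh u"
  using someI_ex[OF hh_ex] unfolding hh_def[symmetric] by auto

lemma sig_fun: "\<sigma> = (\<lambda>u. u + u^5 * hh u)" using hh(2) by auto
lemma sig0: "\<sigma> 0 = 0" using hh(2)[of 0] by simp

lemma hh_der: "(hh has_field_derivative deriv hh u) (at u)"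
  using hh(1) holomorphic_derivI by blast
lemma dhh_hol: "deriv hh holomorphic_on UNIV" using hh(1) holomorphic_deriv by blast

lemma dsig: "deriv \<sigma> u = 1 + 5*u^4 * hh u + u^5 * deriv hh u"
proof -
  have "((\<lambda>u. u + u^5 * hh u) has_field_derivative 1 + 5*u^4 * hh u + u^5 * deriv hh u) (at u)"
    by (auto intro!: derivative_eq_intros hh_der)
  then show ?thesis by (subst sig_fun) (rule DERIV_imp_deriv)
qed

lemma dsig0: "deriv \<sigma> 0 = 1" by (simp add: dsig)

lemma openU: "open U"
proof -
  have "continuous_on UNIV \<sigma>" using sig_hol holomorphic_on_imp_continuous_on by blast
  then have "open (\<sigma> -` (-{0}))" by (intro open_vimage) auto
  moreover have "\<sigma> -` (-{0}) = U" by auto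
  ultimately show ?thesis by simp
qed

lemma dsig_hol: "deriv \<sigma> holomorphic_on UNIV" using sig_hol holomorphic_deriv by blast

lemma Zt_eq: "Zt = (\<lambda>u. deriv \<sigma> u / \<sigma> u)" by (auto simp: wzeta_def)
lemma Zt_hol: "Zt holomorphic_on U"
  unfolding Zt_eq by (intro holomorphic_intros holomorphic_on_subset[OF dsig_hol]
      holomorphic_on_subset[OF sig_hol]) auto
lemma Pw_eq: "Pw = (\<lambda>u. - deriv Zt u)" by (auto simp: wp_def)
lemma Pw_hol: "Pw holomorphic_on U"
  unfolding Pw_eq by (intro holomorphic_intros holomorphic_deriv Zt_hol openU)
lemma Pw1_hol: "Pw1 holomorphic_on U" by (intro holomorphic_deriv Pw_hol openU)

lemma Zt_der: "\<sigma> u \<noteq> 0 \<Longrightarrow> (Zt has_field_derivative - Pw u) (at u)"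
  using holomorphic_derivI[OF Zt_hol openU, of u] by (simp add: wp_def)
lemma Pw_der: "\<sigma> u \<noteq> 0 \<Longrightarrow> (Pw has_field_derivative Pw1 u) (at u)"
  using holomorphic_derivI[OF Pw_hol openU, of u] by simp
lemma Pw1_der: "\<sigma> u \<noteq> 0 \<Longrightarrow> (Pw1 has_field_derivative deriv Pw1 u) (at u)"
  using holomorphic_derivI[OF Pw1_hol openU, of u] by simp

lemma ode2:
  assumes "\<sigma> u \<noteq> 0" "Pw1 u \<noteq> 0"
  shows "deriv Pw1 u = 6*(Pw u)^2 - g2/2"
proof -
  have d1: "((\<lambda>x. (Pw1 x)^2) has_field_derivative 2 * Pw1 u * deriv Pw1 u) (at u)"
    using Pw1_der[OF assms(1)] by (auto intro!: derivative_eq_intros)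
  have d1': "((\<lambda>x. 4*(Pw x)^3 - g2 * Pw x - g3) has_field_derivative 2 * Pw1 u * deriv Pw1 u) (at u)"
    by (rule has_field_derivative_transform_within_open[OF d1 openU]) (use assms sig_curve in auto)
  have d2: "((\<lambda>x. 4*(Pw x)^3 - g2 * Pw x - g3) has_field_derivative (12*(Pw u)^2 - g2) * Pw1 u) (at u)"
    using Pw_der[OF assms(1)] by (auto intro!: derivative_eq_intros simp: algebra_simps)
  have "2 * Pw1 u * deriv Pw1 u = (12*(Pw u)^2 - g2) * Pw1 u"
    using DERIV_unique[OF d1' d2] .
  then have "Pw1 u * (2 * deriv Pw1 u) = Pw1 u * (12*(Pw u)^2 - g2)" by (simp add: algebra_simps)
  then have "2 * deriv Pw1 u = 12*(Pw u)^2 - g2" using assms(2) by simp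
  then show ?thesis by (simp add: field_simps)
qed

definition "kk u = (4 * hh u + u * deriv hh u) / (1 + u^4 * hh u)"
definition "qq u = -3 * kk u - u * deriv kk u"

lemma r0_ex: "\<exists>r>0. \<forall>u\<in>ball 0 r. 1 + u^4 * hh u \<noteq> 0"
proof (rule isCont_nz)
  show "isCont (\<lambda>u. 1 + u^4 * hh u) 0"
    using hh(1) by (intro continuous_intros) (meson UNIV_I continuous_on_eq_continuous_at holomorphic_on_imp_continuous_on open_UNIV)
qed simp

definition "r0 = (SOME r. r > 0 \<and> (\<forall>u\<in>ball 0 r. 1 + u^4 * hh u \<noteq> 0))"
lemma r0: "r0 > 0" "u \<in> ball 0 r0 \<Longrightarrow> 1 + u^4 * hh u \<noteq> 0"
  using someI_ex[OF r0_ex] unfolding r0_def[symmetric] by auto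

lemma kk_hol: "kk holomorphic_on ball 0 r0"
proof -
  have "(\<lambda>u. (4 * hh u + u * deriv hh u) / (1 + u^4 * hh u)) holomorphic_on ball 0 r0"
    using r0(2) by (intro holomorphic_intros holomorphic_on_subset[OF hh(1)] holomorphic_on_subset[OF dhh_hol]) auto
  then show ?thesis by (simp add: kk_def[abs_def])
qed
lemma dkk_hol: "deriv kk holomorphic_on ball 0 r0" by (intro holomorphic_deriv kk_hol) auto
lemma qq_hol: "qq holomorphic_on ball 0 r0"
proof -
  have "(\<lambda>u. -3 * kk u - u * deriv kk u) holomorphic_on ball 0 r0"
    by (intro holomorphic_intros kk_hol dkk_hol)
  then show ?thesis by (simp add: qq_def[abs_def])
qed
lemma q1_hol: "deriv qq holomorphic_on ball 0 r0" by (intro holomorphic_deriv qq_hol) auto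
lemma q2_hol: "deriv (deriv qq) holomorphic_on ball 0 r0" by (intro holomorphic_deriv q1_hol) auto

lemma sig_nz: "u \<in> ball 0 r0 \<Longrightarrow> u \<noteq> 0 \<Longrightarrow> \<sigma> u \<noteq> 0"
proof -
  assume a: "u \<in> ball 0 r0" "u \<noteq> 0"
  have "\<sigma> u = u * (1 + u^4 * hh u)" by (simp add: hh(2) algebra_simps power_numeral_reduce)
  then show ?thesis using a r0(2)[OF a(1)] by simp
qed

lemma Zt_near:
  assumes "u \<in> ball 0 r0" "u \<noteq> 0"
  shows "Zt u = 1/u + u^3 * kk u"
proof -
  have nz: "1 + u^4 * hh u \<noteq> 0" using r0(2) assms by auto
  have "Zt u = (1 + 5*u^4 * hh u + u^5 * deriv hh u) / (u + u^5 * hh u)"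
    by (simp add: wzeta_def dsig hh(2)[symmetric])
  also have "\<dots> = 1/u + u^3 * kk u"
    using nz assms(2) unfolding kk_def by (simp add: field_simps) (simp add: algebra_simps power_numeral_reduce)
  finally show ?thesis .
qed

lemma pball_open: "open (ball (0::complex) r - {0})" by (simp add: open_delete)

lemma Pw_near:
  assumes "u \<in> ball 0 r0" "u \<noteq> 0"
  shows "Pw u = 1/u^2 + u^2 * qq u"
proof -
  have "deriv Zt u = deriv (\<lambda>x. 1/x + x^3 * kk x) u"
    by (rule deriv_on_open[OF pball_open]) (use assms Zt_near in auto)
  also have "\<dots> = - 1/u^2 + 3*u^2 * kk u + u^3 * deriv kk u"
  proof (rule DERIV_imp_deriv)
    have "(kk has_field_derivative deriv kk u) (at u)"
      using holomorphic_derivI[OF kk_hol _ assms(1)] by simp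
    then show "((\<lambda>x. 1/x + x^3 * kk x) has_field_derivative - 1/u^2 + 3*u^2 * kk u + u^3 * deriv kk u) (at u)"
      using assms(2) by (auto intro!: derivative_eq_intros simp: field_simps power2_eq_square)
  qed
  finally show ?thesis by (simp add: wp_def qq_def field_simps power2_eq_square power3_eq_cube)
qed

lemma Pw1_near:
  assumes "u \<in> ball 0 r0" "u \<noteq> 0"
  shows "Pw1 u = -2/u^3 + 2*u * qq u + u^2 * deriv qq u"
proof -
  have "Pw1 u = deriv (\<lambda>x. 1/x^2 + x^2 * qq x) u"
    by (rule deriv_on_open[OF pball_open]) (use assms Pw_near in auto)
  also have "\<dots> = -2/u^3 + 2*u * qq u + u^2 * deriv qq u"
  proof (rule DERIV_imp_deriv)
    have "(qq has_field_derivative deriv qq u) (at u)"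
      using holomorphic_derivI[OF qq_hol _ assms(1)] by simp
    then show "((\<lambda>x. 1/x^2 + x^2 * qq x) has_field_derivative -2/u^3 + 2*u * qq u + u^2 * deriv qq u) (at u)"
      using assms(2) by (auto intro!: derivative_eq_intros simp: field_simps power2_eq_square power3_eq_cube)
  qed
  finally show ?thesis .
qed


definition "NN u = -2 + 2*u^4*qq u + u^5*deriv qq u"

lemma r1_ex: "\<exists>r>0. r \<le> r0 \<and> (\<forall>u\<in>ball 0 r. NN u \<noteq> 0)"
proof -
  have "isCont NN 0" unfolding NN_def[abs_def]
    using hol_isCont[OF qq_hol r0(1)] hol_isCont[OF q1_hol r0(1)] by (intro continuous_intros) auto
  moreover have "NN 0 \<noteq> 0" by (simp add: NN_def)
  ultimately obtain r where "r > 0" "\<forall>u\<in>ball 0 r. NN u \<noteq> 0" using isCont_nz by blast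
  then show ?thesis using r0(1) by (intro exI[of _ "min r r0"]) auto
qed

definition "r1 = (SOME r. r > 0 \<and> r \<le> r0 \<and> (\<forall>u\<in>ball 0 r. NN u \<noteq> 0))"
lemma r1: "r1 > 0" "r1 \<le> r0" "u \<in> ball 0 r1 \<Longrightarrow> NN u \<noteq> 0"
  using someI_ex[OF r1_ex] unfolding r1_def[symmetric] by auto

lemma in_r0: "u \<in> ball 0 r1 \<Longrightarrow> u \<in> ball 0 r0" using r1(2) by auto

lemma Pw1_nz:
  assumes "u \<in> ball 0 r1" "u \<noteq> 0" shows "Pw1 u \<noteq> 0"
proof -
  have "Pw1 u = NN u / u^3"
    using Pw1_near[OF in_r0[OF assms(1)] assms(2)] assms(2) by (simp add: NN_def field_simps eval_nat_numeral)
  then show ?thesis using r1(3)[OF assms(1)] assms(2) by simp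
qed

lemma ode2_near:
  assumes "u \<in> ball 0 r1" "u \<noteq> 0" shows "deriv Pw1 u = 6*(Pw u)^2 - g2/2"
  using ode2 sig_nz[OF in_r0[OF assms(1)] assms(2)] Pw1_nz[OF assms] by blast


lemma addition:
  assumes rF: "rF > 0" and Fh: "F holomorphic_on ball 0 rF"
    and Fode: "\<And>u. u \<in> ball 0 rF \<Longrightarrow> deriv (deriv F) u = 6 * (F u)^2 - g2/2"
    and F0: "F 0 = P0" and F1: "deriv F 0 = Q0" and cQ: "Q0^2 = 4*P0^3 - g2*P0 - g3"
  shows "\<exists>r>0. \<forall>u\<in>ball 0 r - {0}. Pw u \<noteq> P0 \<and> F u = (Pw1 u - Q0)^2/(4*(Pw u - P0)^2) - Pw u - P0"
proof -
  define D1 where "D1 = (\<lambda>u. 1 - P0*u^2 + u^4 * qq u)"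
  define NQ where "NQ = (\<lambda>u. -2 + 2*u^4*qq u + u^5*deriv qq u - Q0*u^3)"
  define M where "M = (\<lambda>u. -2*P0 - Q0*u + 4*u^2*qq u + u^3*deriv qq u)"
  define Bt where "Bt = (\<lambda>u. (NQ u - 2*D1 u) * M u / (4*(D1 u)^2) - u^2 * qq u - P0)"
  define Bf where "Bf = (\<lambda>u. (Pw1 u - Q0)^2/(4*(Pw u - P0)^2) - Pw u - P0)"
  define W where "W = (\<lambda>u. 6*(Pw u)^2 - g2/2)"
  define B1f where "B1f = (\<lambda>u. (Pw1 u - Q0) * (W u * (Pw u - P0) - (Pw1 u - Q0) * Pw1 u) / (2 * (Pw u - P0)^3) - Pw1 u)"
  define B2f where "B2f = (\<lambda>u. (W u*(W u*(Pw u - P0) - (Pw1 u-Q0)*Pw1 u) + (Pw1 u-Q0)*(12*Pw u*Pw1 u*(Pw u - P0) - (Pw1 u-Q0)*W u))/(2*(Pw u - P0)^3)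
       - 3*((Pw1 u-Q0)*(W u*(Pw u - P0) - (Pw1 u-Q0)*Pw1 u))*Pw1 u/(2*(Pw u - P0)^4) - W u)"
  have "isCont D1 0" unfolding D1_def using hol_isCont[OF qq_hol r0(1)] by (intro continuous_intros) auto
  moreover have "D1 0 \<noteq> 0" by (simp add: D1_def)
  ultimately obtain r2 where r2: "r2 > 0" "\<forall>u\<in>ball 0 r2. D1 u \<noteq> 0" using isCont_nz by blast
  define r where "r = min r2 (min rF r1)"
  have r: "r > 0" using r2 rF r1 by (simp add: r_def)
  have sub: "ball 0 r \<subseteq> ball 0 r2" "ball 0 r \<subseteq> ball 0 rF" "ball 0 r \<subseteq> ball 0 r1" "ball 0 r \<subseteq> ball 0 r0"
    using r1(2) by (auto simp: r_def)
  have D1nz: "D1 u \<noteq> 0" if "u \<in> ball 0 r" for u using r2(2) sub(1) that by blast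
  have qh: "qq holomorphic_on ball 0 r" "deriv qq holomorphic_on ball 0 r"
    using qq_hol q1_hol sub(4) holomorphic_on_subset by blast+
  have Bt_hol: "Bt holomorphic_on ball 0 r"
    unfolding Bt_def NQ_def M_def D1_def using qh D1nz[unfolded D1_def] by (intro holomorphic_intros) auto
  have facts: "\<sigma> x \<noteq> 0" "Pw1 x \<noteq> 0" "deriv Pw1 x = W x" "x \<noteq> 0" "D1 x \<noteq> 0"
    "Pw x = 1/x^2 + x^2 * qq x" "Pw1 x = -2/x^3 + 2*x * qq x + x^2 * deriv qq x"
    if "x \<in> ball 0 r - {0}" for x
  proof -
    have x: "x \<in> ball 0 r0" "x \<in> ball 0 r1" "x \<in> ball 0 r" "x \<noteq> 0" using that sub by blast+
    show "\<sigma> x \<noteq> 0" "Pw1 x \<noteq> 0" "deriv Pw1 x = W x" "x \<noteq> 0" "D1 x \<noteq> 0"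
    "Pw x = 1/x^2 + x^2 * qq x" "Pw1 x = -2/x^3 + 2*x * qq x + x^2 * deriv qq x"
      using sig_nz[OF x(1) x(4)] Pw1_nz[OF x(2) x(4)] ode2_near[OF x(2) x(4)] D1nz[OF x(3)]
        Pw_near[OF x(1) x(4)] Pw1_near[OF x(1) x(4)] x(4) by (auto simp: W_def)
  qed
  have PwX: "Pw u - P0 = D1 u / u^2" if "u \<in> ball 0 r - {0}" for u
    using facts[OF that] by (simp add: D1_def field_simps)
  have PwXnz: "Pw u - P0 \<noteq> 0" if "u \<in> ball 0 r - {0}" for u
    using facts[OF that] PwX[OF that] by simp
  have Pw1X: "Pw1 u - Q0 = NQ u / u^3" if "u \<in> ball 0 r - {0}" for u
    using facts[OF that] by (simp add: NQ_def field_simps eval_nat_numeral)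
  have Mrel: "M u = (NQ u + 2 * D1 u) / u^2" if "u \<noteq> 0" for u
    using that by (simp add: NQ_def D1_def M_def field_simps eval_nat_numeral)
  have Bt_eq: "Bt u = Bf u" if "u \<in> ball 0 r - {0}" for u
  proof -
    note f = facts[OF that]
    have "Bf u = (NQ u / u^3)^2 / (4 * (D1 u / u^2)^2) - (1/u^2 + u^2 * qq u) - P0"
      unfolding Bf_def using PwX[OF that] Pw1X[OF that] f by simp
    also have "\<dots> = Bt u"
      unfolding Bt_def using f by (simp add: Mrel field_simps) (simp add: algebra_simps eval_nat_numeral)
    finally show ?thesis by simp
  qed
  have Bt0: "Bt 0 = P0" by (simp add: Bt_def NQ_def D1_def M_def)
  have hq0: "(qq has_field_derivative deriv qq 0) (at 0)"
    using holomorphic_derivI[OF qq_hol _ ] r0(1) by auto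
  have hq1: "(deriv qq has_field_derivative deriv (deriv qq) 0) (at 0)"
    using holomorphic_derivI[OF q1_hol _ ] r0(1) by auto
  have "(Bt has_field_derivative Q0) (at 0)"
    unfolding Bt_def NQ_def D1_def M_def
    by (auto intro!: derivative_eq_intros hq0 hq1)
  then have Bt1: "deriv Bt 0 = Q0" by (rule DERIV_imp_deriv)
  have hB1: "(Bf has_field_derivative B1f x) (at x)" if "x \<in> ball 0 r - {0}" for x
  proof -
    note f = facts[OF that]
    note nz = PwXnz[OF that]
    have dA: "((\<lambda>x. Pw1 x - Q0) has_field_derivative W x) (at x)"
      using Pw1_der[OF f(1)] f(3) by (auto intro!: derivative_eq_intros)
    have dX: "((\<lambda>x. Pw x - P0) has_field_derivative Pw1 x) (at x)"
      using Pw_der[OF f(1)] by (auto intro!: derivative_eq_intros)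
    have "((\<lambda>x. (Pw1 x - Q0)^2/(4*(Pw x - P0)^2) - Pw x - P0) has_field_derivative
        (Pw1 x - Q0) * (W x * (Pw x - P0) - (Pw1 x - Q0) * Pw1 x) / (2 * (Pw x - P0)^3) - Pw1 x - 0) (at x)"
      by (intro derivative_intros dq1[OF dA dX nz] Pw_der[OF f(1)])
    then show ?thesis unfolding Bf_def B1f_def by simp
  qed
  have hB2: "(B1f has_field_derivative B2f x) (at x)" if "x \<in> ball 0 r - {0}" for x
  proof -
    note f = facts[OF that]
    note nz = PwXnz[OF that]
    have dA: "((\<lambda>x. Pw1 x - Q0) has_field_derivative W x) (at x)"
      using Pw1_der[OF f(1)] f(3) by (auto intro!: derivative_eq_intros)
    have dX: "((\<lambda>x. Pw x - P0) has_field_derivative Pw1 x) (at x)"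
      using Pw_der[OF f(1)] by (auto intro!: derivative_eq_intros)
    have dW: "(W has_field_derivative 12 * Pw x * Pw1 x) (at x)"
      unfolding W_def using Pw_der[OF f(1)] by (auto intro!: derivative_eq_intros)
    have dT: "((\<lambda>x. W x * (Pw x - P0) - (Pw1 x - Q0) * Pw1 x) has_field_derivative
        12 * Pw x * Pw1 x * (Pw x - P0) - (Pw1 x - Q0) * W x) (at x)"
      using dW dX dA Pw1_der[OF f(1)] f(3) Pw_der[OF f(1)]
      by (auto intro!: derivative_eq_intros simp: algebra_simps)
    have "((\<lambda>x. (Pw1 x - Q0) * (W x * (Pw x - P0) - (Pw1 x - Q0) * Pw1 x) / (2 * (Pw x - P0)^3) - Pw1 x)
       has_field_derivative
       (W x * (W x * (Pw x - P0) - (Pw1 x - Q0) * Pw1 x) + (Pw1 x - Q0) * (12 * Pw x * Pw1 x * (Pw x - P0) - (Pw1 x - Q0) * W x))/(2*(Pw x - P0)^3)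
        - 3*((Pw1 x - Q0) * (W x * (Pw x - P0) - (Pw1 x - Q0) * Pw1 x))*Pw1 x/(2*(Pw x - P0)^4) - W x) (at x)"
      using Pw1_der[OF f(1)] f(3)
      by (intro derivative_intros dq2[OF dA dT dX nz]) auto
    then show ?thesis unfolding B1f_def B2f_def by simp
  qed
  have dBt: "deriv Bt x = B1f x" if "x \<in> ball 0 r - {0}" for x
  proof -
    have "deriv Bt x = deriv Bf x"
      by (rule deriv_on_open[OF pball_open that]) (use Bt_eq in auto)
    also have "\<dots> = B1f x" by (rule DERIV_imp_deriv[OF hB1[OF that]])
    finally show ?thesis .
  qed
  have ddBt: "deriv (deriv Bt) x = B2f x" if "x \<in> ball 0 r - {0}" for x
  proof -
    have "deriv (deriv Bt) x = deriv B1f x"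
      by (rule deriv_on_open[OF pball_open that]) (use dBt in auto)
    also have "\<dots> = B2f x" by (rule DERIV_imp_deriv[OF hB2[OF that]])
    finally show ?thesis .
  qed
  have B2eq: "B2f x = 6*(Bf x)^2 - g2/2" if "x \<in> ball 0 r - {0}" for x
  proof -
    note f = facts[OF that]
    note nz = PwXnz[OF that]
    define X where "X = Pw x - P0"
    define Y where "Y = Pw1 x"
    have PX: "Pw x = X + P0" by (simp add: X_def)
    have Xnz: "X \<noteq> 0" using nz by (simp add: X_def)
    have c1: "Y^2 = 4*(X+P0)^3 - g2*(X+P0) - g3" using sig_curve[OF f(1)] by (simp add: X_def Y_def)
    note A = addpoly[OF c1 cQ]
    have e1: "B2f x = (4*X*((6*(X+P0)^2 - g2/2)*((6*(X+P0)^2 - g2/2)*X - (Y-Q0)*Y) + (Y-Q0)*(12*(X+P0)*Y*X - (Y-Q0)*(6*(X+P0)^2 - g2/2)))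
     - 12*((Y-Q0)*((6*(X+P0)^2 - g2/2)*X - (Y-Q0)*Y))*Y - 8*X^4*(6*(X+P0)^2 - g2/2)) / (8*X^4)"
      unfolding B2f_def W_def PX Y_def[symmetric] using Xnz by (simp add: field_simps eval_nat_numeral)
    have e2: "6*(Bf x)^2 - g2/2 = (3*((Y-Q0)^2 - 4*X^2*(X+2*P0))^2 - 4*g2*X^4) / (8*X^4)"
      unfolding Bf_def PX Y_def[symmetric] using Xnz by (simp add: field_simps eval_nat_numeral)
    show ?thesis unfolding e1 e2 A ..
  qed
  have ode_Bt: "deriv (deriv Bt) u = 6*(Bt u)^2 - g2/2" if "u \<in> ball 0 r" for u
  proof (rule eq_on_ball_ext[where f="deriv (deriv Bt)" and g="\<lambda>u. 6*(Bt u)^2 - g2/2" and r=r and z=u])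
    show "deriv (deriv Bt) holomorphic_on ball 0 r" by (intro holomorphic_deriv Bt_hol) auto
    show "(\<lambda>u. 6 * (Bt u)^2 - g2/2) holomorphic_on ball 0 r" by (intro holomorphic_intros Bt_hol)
    fix z :: complex assume "z \<in> ball 0 r - {0}" then show "deriv (deriv Bt) z = 6*(Bt z)^2 - g2/2"
      using ddBt B2eq Bt_eq by auto
  qed (use r that in auto)
  have hF': "F holomorphic_on ball 0 r" using Fh sub(2) holomorphic_on_subset by blast
  have oF': "\<And>z. z \<in> ball 0 r \<Longrightarrow> deriv (deriv F) z = 6 * (F z)^2 - g2/2" using Fode sub(2) by blast
  have z0m: "(0::complex) \<in> ball 0 r" using r by simp
  have i0: "F 0 = Bt 0" using F0 Bt0 by simp
  have i1: "deriv F 0 = deriv Bt 0" using F1 Bt1 by simp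
  have FB: "F u = Bt u" if "u \<in> ball 0 r" for u
    by (rule ode_unique[OF open_ball connected_ball z0m that hF' Bt_hol oF' ode_Bt i0 i1])
  show ?thesis
  proof (intro exI[of _ r] conjI ballI r)
    fix u :: complex assume u: "u \<in> ball 0 r - {0}"
    show "Pw u \<noteq> P0" using PwXnz[OF u] by simp
    show "F u = (Pw1 u - Q0)^2/(4*(Pw u - P0)^2) - Pw u - P0"
      using FB[of u] Bt_eq[OF u] u by (simp add: Bf_def)
  qed
qed

end


definition EE :: "(complex \<Rightarrow> complex) \<Rightarrow> complex \<Rightarrow> complex \<Rightarrow> complex \<Rightarrow> complex \<Rightarrow> complex" where
  "EE \<sigma> \<mu>1 v w u = exp (-(((1 - deriv (wp \<sigma>) w / deriv (wp \<sigma>) v)/2) * ln (\<sigma> (u + v) / \<sigma> v)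
      + ((1 + deriv (wp \<sigma>) w / deriv (wp \<sigma>) v)/2) * ln (\<sigma> (v - u) / \<sigma> v)
      + (- \<mu>1 / 2 + deriv (wp \<sigma>) w / deriv (wp \<sigma>) v * wzeta \<sigma> v) * u))"
definition "FF \<sigma> \<mu>1 v w u = \<sigma> u * EE \<sigma> \<mu>1 v w u"
definition "PPv \<sigma> \<mu>1 v w u = \<mu>1/2 * FF \<sigma> \<mu>1 v w u - deriv (FF \<sigma> \<mu>1 v w) u"
definition "SSv \<sigma> \<mu>1 v w u = 1 / ((EE \<sigma> \<mu>1 v w u)^2 * ((deriv \<sigma> u)^2 - \<sigma> u * deriv (deriv \<sigma>) u - wp \<sigma> v * (\<sigma> u)^2))"
definition "DDv \<sigma> \<mu>1 v w k u = FF \<sigma> \<mu>1 v w u ^ k / fact k"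

lemma kpoly:
  fixes X Y Q a2 g2 g3 :: complex
  assumes "Y^2 = 4*(X+a2)^3 - g2*(X+a2) - g3" "Q^2 = 4*a2^3 - g2*a2 - g3"
  shows "Q^2 - Y^2 + 2*(6*(X+a2)^2 - g2/2)*X - 4*X^2*(2*(X+a2) + a2) = 0"
  using assms by algebra

lemma kid_alg:
  fixes P Y Q al a2 g2 g3 :: complex
  assumes X: "P - a2 \<noteq> 0" and c1: "Y^2 = 4*P^3 - g2*P - g3" and c2: "Q^2 = 4*a2^3 - g2*a2 - g3"
  shows "((- P - (1 - al)/2 * (- ((Y - Q)^2/(4*(P - a2)^2) - P - a2))) + (1 + al)/2 * (- (- ((Y + Q)^2/(4*(P - a2)^2) - P - a2))) - 0)
     - (0 - ((6*P^2 - g2/2) * (P - a2) - (Y + al*Q) * Y)/(2*(P - a2)^2)) = 0"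
proof -
  define X where "X = P - a2"
  have P: "P = X + a2" by (simp add: X_def)
  have Xnz: "X \<noteq> 0" using X by (simp add: X_def)
  have k: "Q^2 - Y^2 + 2*(6*(X+a2)^2 - g2/2)*X - 4*X^2*(2*(X+a2) + a2) = 0"
    using kpoly c1[unfolded P] c2 by blast
  have e: "((- P - (1 - al)/2 * (- ((Y - Q)^2/(4*(P - a2)^2) - P - a2))) + (1 + al)/2 * (- (- ((Y + Q)^2/(4*(P - a2)^2) - P - a2))) - 0)
     - (0 - ((6*P^2 - g2/2) * (P - a2) - (Y + al*Q) * Y)/(2*(P - a2)^2))
     = (Q^2 - Y^2 + 2*(6*(X+a2)^2 - g2/2)*X - 4*X^2*(2*(X+a2) + a2)) / (4*X^2)"
    unfolding P using Xnz by (simp add: field_simps) (simp add: algebra_simps power2_eq_square power3_eq_cube)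
  show ?thesis unfolding e k by simp
qed

lemma ball_half: "z \<in> ball (1::complex) (1/2) \<Longrightarrow> z \<notin> \<real>\<^sub>\<le>\<^sub>0 \<and> z \<noteq> 0"
proof -
  assume "z \<in> ball 1 (1/2)"
  then have "norm (1 - z) < 1/2" by (simp add: dist_norm)
  moreover have "\<bar>Re (1 - z)\<bar> \<le> norm (1 - z)" by (rule abs_Re_le_cmod)
  ultimately have "Re z > 0" by simp
  then show ?thesis by (auto simp: complex_nonpos_Reals_iff)
qed

lemma chain_p:
  fixes f :: "complex \<Rightarrow> complex"
  shows "(f has_field_derivative D) (at (u + c)) \<Longrightarrow> ((\<lambda>x. f (x + c)) has_field_derivative D) (at u)"
  using DERIV_shift by blast

lemma chain_m:
  fixes f :: "complex \<Rightarrow> complex"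
  assumes "(f has_field_derivative D) (at (c - u))"
  shows "((\<lambda>x. f (c - x)) has_field_derivative - D) (at u)"
proof -
  have g: "((\<lambda>x. c - x) has_field_derivative -1) (at u)" by (auto intro!: derivative_eq_intros)
  have "((\<lambda>x. f ((\<lambda>x. c - x) x)) has_field_derivative D * -1) (at u)"
    by (rule DERIV_chain2[where g="\<lambda>x. c - x" and x=u, OF assms g])
  then show ?thesis by simp
qed

lemma dq3:
  fixes A X :: "complex \<Rightarrow> complex"
  assumes "(A has_field_derivative A') (at x)" "(X has_field_derivative X') (at x)" "X x \<noteq> 0"
  shows "((\<lambda>x. A x / (2 * X x)) has_field_derivative (A' * X x - A x * X')/(2*(X x)^2)) (at x)"
  using assms by (auto intro!: derivative_eq_intros simp: field_simps power2_eq_square)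

context inst begin

abbreviation "a1 \<equiv> \<mu>1/2"
abbreviation "a2 \<equiv> Pw v"
abbreviation "a3 \<equiv> Pw1 w"
abbreviation "a4 \<equiv> g2/2"
abbreviation "a6 \<equiv> 4*\<mu>6 + \<mu>3^2"
abbreviation "Qv \<equiv> Pw1 v"
abbreviation "al \<equiv> Pw1 w / Pw1 v"
abbreviation "b1 \<equiv> (1 - al)/2"
abbreviation "b2 \<equiv> (1 + al)/2"
abbreviation "cc \<equiv> - \<mu>1/2 + al * Zt v"

lemma al_Q: "al * Qv = a3" using Qnz by simp
lemma curve_v: "Qv^2 = 4*a2^3 - g2*a2 - g3" using sig_curve[OF sv] .
lemma g3_eq: "g3 = 4*a2^3 - 2*a2*a4 - a6"
  unfolding inv_g2_def inv_g3_def wpv by (simp add: field_simps) algebra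

lemma rv_ex: "\<exists>r>0. \<forall>x\<in>ball v r. \<sigma> x \<noteq> 0 \<and> Pw1 x \<noteq> 0"
proof -
  have c1: "isCont \<sigma> v"
    using sig_hol by (meson UNIV_I continuous_on_eq_continuous_at holomorphic_on_imp_continuous_on open_UNIV)
  have c2: "isCont Pw1 v"
    using Pw1_hol openU sv by (meson continuous_on_eq_continuous_at holomorphic_on_imp_continuous_on mem_Collect_eq)
  obtain ra where ra: "ra > 0" "\<forall>x\<in>ball v ra. \<sigma> x \<noteq> 0" using isCont_nz[OF c1 sv] by blast
  obtain rb where rb: "rb > 0" "\<forall>x\<in>ball v rb. Pw1 x \<noteq> 0" using isCont_nz[OF c2 Qnz] by blast
  show ?thesis by (rule exI[of _ "min ra rb"]) (use ra rb in auto)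
qed

definition "rv = (SOME r. r > 0 \<and> (\<forall>x\<in>ball v r. \<sigma> x \<noteq> 0 \<and> Pw1 x \<noteq> 0))"
lemma rv: "rv > 0" "x \<in> ball v rv \<Longrightarrow> \<sigma> x \<noteq> 0" "x \<in> ball v rv \<Longrightarrow> Pw1 x \<noteq> 0"
  using someI_ex[OF rv_ex] unfolding rv_def[symmetric] by auto

lemma shift: "u \<in> ball 0 rv \<Longrightarrow> u + v \<in> ball v rv" "u \<in> ball 0 rv \<Longrightarrow> v - u \<in> ball v rv"
  by (auto simp: dist_norm)

lemma Fp_hol: "(\<lambda>u. Pw (u + v)) holomorphic_on ball 0 rv"
proof -
  have "Pw \<circ> (\<lambda>u. u + v) holomorphic_on ball 0 rv"
    by (rule holomorphic_on_compose_gen[OF _ Pw_hol]) (use rv shift in \<open>auto intro!: holomorphic_intros\<close>)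
  then show ?thesis by (simp add: o_def)
qed

lemma Fm_hol: "(\<lambda>u. Pw (v - u)) holomorphic_on ball 0 rv"
proof -
  have "Pw \<circ> (\<lambda>u. v - u) holomorphic_on ball 0 rv"
    by (rule holomorphic_on_compose_gen[OF _ Pw_hol]) (use rv shift in \<open>auto intro!: holomorphic_intros\<close>)
  then show ?thesis by (simp add: o_def)
qed

lemma Fp_d1: "u \<in> ball 0 rv \<Longrightarrow> ((\<lambda>u. Pw (u + v)) has_field_derivative Pw1 (u + v)) (at u)"
  by (rule chain_p, rule Pw_der, rule rv(2), rule shift(1), assumption)
lemma Fm_d1: "u \<in> ball 0 rv \<Longrightarrow> ((\<lambda>u. Pw (v - u)) has_field_derivative - Pw1 (v - u)) (at u)"
  by (rule chain_m, rule Pw_der, rule rv(2), rule shift(2), assumption)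

lemma Fp_dd: "u \<in> ball 0 rv \<Longrightarrow> deriv (deriv (\<lambda>u. Pw (u + v))) u = 6 * (Pw (u + v))^2 - g2/2"
proof -
  assume u: "u \<in> ball 0 rv"
  have "deriv (deriv (\<lambda>u. Pw (u + v))) u = deriv (\<lambda>x. Pw1 (x + v)) u"
    by (rule deriv_on_open[OF open_ball u]) (use Fp_d1 DERIV_imp_deriv in blast)
  also have "\<dots> = deriv Pw1 (u + v)"
    by (intro DERIV_imp_deriv chain_p Pw1_der rv(2) shift(1) u)
  also have "\<dots> = 6 * (Pw (u + v))^2 - g2/2"
    using ode2 rv shift u by blast
  finally show ?thesis .
qed

lemma Fm_dd: "u \<in> ball 0 rv \<Longrightarrow> deriv (deriv (\<lambda>u. Pw (v - u))) u = 6 * (Pw (v - u))^2 - g2/2"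
proof -
  assume u: "u \<in> ball 0 rv"
  have "deriv (deriv (\<lambda>u. Pw (v - u))) u = deriv (\<lambda>x. - Pw1 (v - x)) u"
    by (rule deriv_on_open[OF open_ball u]) (use Fm_d1 DERIV_imp_deriv in blast)
  also have "\<dots> = deriv Pw1 (v - u)"
  proof -
    have "((\<lambda>x. Pw1 (v - x)) has_field_derivative - deriv Pw1 (v - u)) (at u)"
      by (intro chain_m Pw1_der rv(2) shift(2) u)
    then have "((\<lambda>x. - Pw1 (v - x)) has_field_derivative deriv Pw1 (v - u)) (at u)"
      using DERIV_minus by fastforce
    then show ?thesis by (rule DERIV_imp_deriv)
  qed
  also have "\<dots> = 6 * (Pw (v - u))^2 - g2/2"
    using ode2 rv shift u by blast
  finally show ?thesis .
qed

lemma addp: "\<exists>r>0. \<forall>u\<in>ball 0 r - {0}. Pw u \<noteq> a2 \<and> Pw (u + v) = (Pw1 u - Qv)^2/(4*(Pw u - a2)^2) - Pw u - a2"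
  by (rule addition[OF rv(1) Fp_hol Fp_dd _ _ curve_v])
     (auto simp: DERIV_imp_deriv[OF Fp_d1] rv(1))

lemma addm: "\<exists>r>0. \<forall>u\<in>ball 0 r - {0}. Pw u \<noteq> a2 \<and> Pw (v - u) = (Pw1 u + Qv)^2/(4*(Pw u - a2)^2) - Pw u - a2"
proof -
  have c: "(- Qv)^2 = 4*a2^3 - g2*a2 - g3" using curve_v by simp
  have "\<exists>r>0. \<forall>u\<in>ball 0 r - {0}. Pw u \<noteq> a2 \<and> Pw (v - u) = (Pw1 u - (- Qv))^2/(4*(Pw u - a2)^2) - Pw u - a2"
    by (rule addition[OF rv(1) Fm_hol Fm_dd _ _ c]) (auto simp: DERIV_imp_deriv[OF Fm_d1] rv(1))
  then show ?thesis by simp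
qed


lemma Zt_p_der: "\<sigma> (u + v) \<noteq> 0 \<Longrightarrow> ((\<lambda>x. Zt (x + v)) has_field_derivative - Pw (u + v)) (at u)"
  by (intro chain_p Zt_der)
lemma Zt_m_der: "\<sigma> (v - u) \<noteq> 0 \<Longrightarrow> ((\<lambda>x. Zt (v - x)) has_field_derivative - (- Pw (v - u))) (at u)"
  by (intro chain_m Zt_der)

lemma Zt_p_hol: "(\<lambda>u. Zt (u + v)) holomorphic_on ball 0 rv"
proof -
  have "Zt \<circ> (\<lambda>u. u + v) holomorphic_on ball 0 rv"
    by (rule holomorphic_on_compose_gen[OF _ Zt_hol]) (use rv shift in \<open>auto intro!: holomorphic_intros\<close>)
  then show ?thesis by (simp add: o_def)
qed
lemma Zt_m_hol: "(\<lambda>u. Zt (v - u)) holomorphic_on ball 0 rv"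
proof -
  have "Zt \<circ> (\<lambda>u. v - u) holomorphic_on ball 0 rv"
    by (rule holomorphic_on_compose_gen[OF _ Zt_hol]) (use rv shift in \<open>auto intro!: holomorphic_intros\<close>)
  then show ?thesis by (simp add: o_def)
qed

lemma Kid: "\<exists>r>0. \<forall>u\<in>ball 0 r - {0}. Zt u - b1 * Zt (u + v) + b2 * Zt (v - u) - cc = a1 - (Pw1 u + a3)/(2*(Pw u - a2))"
proof -
  obtain rA where rA: "rA > 0" "\<forall>u\<in>ball 0 rA - {0}. Pw u \<noteq> a2 \<and> Pw (u + v) = (Pw1 u - Qv)^2/(4*(Pw u - a2)^2) - Pw u - a2"
    using addp by blast
  obtain rB where rB: "rB > 0" "\<forall>u\<in>ball 0 rB - {0}. Pw u \<noteq> a2 \<and> Pw (v - u) = (Pw1 u + Qv)^2/(4*(Pw u - a2)^2) - Pw u - a2"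
    using addm by blast
  define D1 where "D1 = (\<lambda>u. 1 - a2*u^2 + u^4 * qq u)"
  have "isCont D1 0" unfolding D1_def using hol_isCont[OF qq_hol r0(1)] by (intro continuous_intros) auto
  moreover have "D1 0 \<noteq> 0" by (simp add: D1_def)
  ultimately obtain rD where rD: "rD > 0" "\<forall>u\<in>ball 0 rD. D1 u \<noteq> 0" using isCont_nz by blast
  define r where "r = min rA (min rB (min rv (min r1 rD)))"
  have r: "r > 0" using rA rB rv r1 rD by (simp add: r_def)
  have sub: "ball 0 r \<subseteq> ball 0 rA" "ball 0 r \<subseteq> ball 0 rB" "ball 0 r \<subseteq> ball 0 rv" "ball 0 r \<subseteq> ball 0 r1"
     "ball 0 r \<subseteq> ball 0 r0" "ball 0 r \<subseteq> ball 0 rD"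
    using r1(2) by (auto simp: r_def)
  define T where "T = (\<lambda>u. u*(-2*a2 + 4*u^2*qq u + u^3*deriv qq u + a3*u)/(2*D1 u) + u^3 * kk u
      - b1 * Zt (u + v) + b2 * Zt (v - u) - cc - a1)"
  define L where "L = (\<lambda>u. Zt u - b1 * Zt (u + v) + b2 * Zt (v - u) - cc - (a1 - (Pw1 u + a3)/(2*(Pw u - a2))))"
  have TL: "T u = L u" if "u \<in> ball 0 r - {0}" for u
  proof -
    have x: "u \<in> ball 0 r0" "u \<noteq> 0" "D1 u \<noteq> 0" using that sub rD by blast+
    have p1: "Pw u - a2 = D1 u / u^2" using x by (simp add: Pw_near D1_def field_simps)
    have p2: "Pw1 u + a3 = (-2 + 2*u^4*qq u + u^5*deriv qq u + a3*u^3)/u^3"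
      using x by (simp add: Pw1_near field_simps eval_nat_numeral)
    have e: "(Pw1 u + a3)/(2*(Pw u - a2)) = (-2 + 2*u^4*qq u + u^5*deriv qq u + a3*u^3)/(2*u*D1 u)"
      unfolding p1 p2 using x by (simp add: field_simps eval_nat_numeral)
    define N where "N = -2 + 2*u^4*qq u + u^5*deriv qq u + a3*u^3"
    define M where "M = -2*a2 + 4*u^2*qq u + u^3*deriv qq u + a3*u"
    have num: "2 * D1 u + N = u^2 * M" unfolding N_def M_def D1_def by (simp add: algebra_simps eval_nat_numeral)
    have key: "1/u + N/(2*u*D1 u) = u * M/(2*D1 u)"
    proof -
      have "1/u + N/(2*u*D1 u) = (2 * D1 u + N)/(2*u*D1 u)" using x by (simp add: field_simps)
      also have "\<dots> = u * M/(2*D1 u)" unfolding num using x by (simp add: field_simps power2_eq_square)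
      finally show ?thesis .
    qed
    have "L u = (1/u + N/(2*u*D1 u)) + u^3*kk u - b1*Zt (u + v) + b2*Zt (v - u) - cc - a1"
      unfolding L_def e N_def[symmetric] by (simp add: Zt_near[OF x(1) x(2)] algebra_simps)
    also have "\<dots> = T u" unfolding key T_def M_def by simp
    finally show ?thesis by simp
  qed
  have T_hol: "T holomorphic_on ball 0 r"
  proof -
    have h: "qq holomorphic_on ball 0 r" "deriv qq holomorphic_on ball 0 r" "kk holomorphic_on ball 0 r"
      "(\<lambda>u. Zt (u + v)) holomorphic_on ball 0 r" "(\<lambda>u. Zt (v - u)) holomorphic_on ball 0 r"
      using holomorphic_on_subset[OF qq_hol sub(5)] holomorphic_on_subset[OF q1_hol sub(5)]
        holomorphic_on_subset[OF kk_hol sub(5)] holomorphic_on_subset[OF Zt_p_hol sub(3)]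
        holomorphic_on_subset[OF Zt_m_hol sub(3)] by auto
    have nz: "2 * (1 - a2*u^2 + u^4 * qq u) \<noteq> 0" if "u \<in> ball 0 r" for u
    proof -
      have "u \<in> ball 0 rD" using sub(6) that by blast
      then have "2 * D1 u \<noteq> 0" using rD by simp
      then show ?thesis unfolding D1_def by assumption
    qed
    show ?thesis unfolding T_def D1_def using h nz by (intro holomorphic_intros) auto
  qed
  have dL: "(L has_field_derivative 0) (at u)" if "u \<in> ball 0 r - {0}" for u
  proof -
    have x: "u \<in> ball 0 r0" "u \<in> ball 0 r1" "u \<noteq> 0" "u \<in> ball 0 rv" "u \<in> ball 0 rA - {0}" "u \<in> ball 0 rB - {0}"
      using that sub by blast+
    have s0: "\<sigma> u \<noteq> 0" using sig_nz x by blast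
    have sp: "\<sigma> (u + v) \<noteq> 0" using rv shift x by blast
    have sm: "\<sigma> (v - u) \<noteq> 0" using rv shift x by blast
    have Xnz: "Pw u - a2 \<noteq> 0" using rA(2) x by auto
    have Bp: "Pw (u + v) = (Pw1 u - Qv)^2/(4*(Pw u - a2)^2) - Pw u - a2" using rA(2) x by auto
    have Bm: "Pw (v - u) = (Pw1 u + Qv)^2/(4*(Pw u - a2)^2) - Pw u - a2" using rB(2) x by auto
    have W: "deriv Pw1 u = 6*(Pw u)^2 - g2/2" using ode2_near x by blast
    have dA: "((\<lambda>x. Pw1 x + a3) has_field_derivative 6*(Pw u)^2 - g2/2) (at u)"
      using Pw1_der[OF s0] W by (auto intro!: derivative_eq_intros)
    have dX: "((\<lambda>x. Pw x - a2) has_field_derivative Pw1 u) (at u)"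
      using Pw_der[OF s0] by (auto intro!: derivative_eq_intros)
    note dq = dq3[OF dA dX Xnz]
    have "(L has_field_derivative ((- Pw u - b1 * (- Pw (u + v))) + b2 * (- (- Pw (v - u))) - 0)
        - (0 - ((6*(Pw u)^2 - g2/2) * (Pw u - a2) - (Pw1 u + a3) * Pw1 u)/(2*(Pw u - a2)^2))) (at u)"
      unfolding L_def
      by (rule DERIV_diff DERIV_add DERIV_cmult DERIV_const Zt_der[OF s0] Zt_p_der[OF sp] Zt_m_der[OF sm] dq)+
    moreover have "((- Pw u - b1 * (- Pw (u + v))) + b2 * (- (- Pw (v - u))) - 0)
        - (0 - ((6*(Pw u)^2 - g2/2) * (Pw u - a2) - (Pw1 u + a3) * Pw1 u)/(2*(Pw u - a2)^2)) = 0"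
    proof -
      have c1: "(Pw1 u)^2 = 4*(Pw u)^3 - g2 * Pw u - g3" using sig_curve[OF s0] .
      have K: "((- Pw u - (1 - al)/2 * (- ((Pw1 u - Qv)^2/(4*(Pw u - a2)^2) - Pw u - a2))) + (1 + al)/2 * (- (- ((Pw1 u + Qv)^2/(4*(Pw u - a2)^2) - Pw u - a2))) - 0)
     - (0 - ((6*(Pw u)^2 - g2/2) * (Pw u - a2) - (Pw1 u + al*Qv) * Pw1 u)/(2*(Pw u - a2)^2)) = 0"
        by (rule kid_alg[OF Xnz c1 curve_v])
      have K2: "((- Pw u - (1 - al)/2 * (- ((Pw1 u - Qv)^2/(4*(Pw u - a2)^2) - Pw u - a2))) + (1 + al)/2 * (- (- ((Pw1 u + Qv)^2/(4*(Pw u - a2)^2) - Pw u - a2))) - 0)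
     - (0 - ((6*(Pw u)^2 - g2/2) * (Pw u - a2) - (Pw1 u + a3) * Pw1 u)/(2*(Pw u - a2)^2)) = 0"
        using K by (simp only: al_Q)
      show ?thesis unfolding Bp Bm by (rule K2)
    qed
    ultimately show ?thesis by simp
  qed
  have dT: "(T has_field_derivative 0) (at u)" if "u \<in> ball 0 r - {0}" for u
    by (rule has_field_derivative_transform_within_open[OF dL[OF that] pball_open that]) (use TL in auto)
  have cT: "continuous_on (ball 0 r) T" using T_hol holomorphic_on_imp_continuous_on by blast
  obtain c where c: "\<And>x. x \<in> ball 0 r \<Longrightarrow> T x = c"
    using DERIV_zero_connected_constant[of "ball 0 r" "{0}" T] cT dT by auto
  have T0: "T 0 = 0" unfolding T_def by (simp add: field_simps)
  have "c = 0" using c[of 0] T0 r by simp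
  show ?thesis
  proof (intro exI[of _ r] conjI ballI r)
    fix u :: complex assume u: "u \<in> ball 0 r - {0}"
    have "L u = 0" using TL[OF u] c[of u] u \<open>c = 0\<close> by auto
    then show "Zt u - b1 * Zt (u + v) + b2 * Zt (v - u) - cc = a1 - (Pw1 u + a3)/(2*(Pw u - a2))"
      unfolding L_def using right_minus_eq by blast
  qed
qed


lemma sig_shift_hol: "(\<lambda>u. \<sigma> (u + c)) holomorphic_on A" "(\<lambda>u. \<sigma> (c - u)) holomorphic_on A"
proof -
  have "\<sigma> \<circ> (\<lambda>u. u + c) holomorphic_on A" "\<sigma> \<circ> (\<lambda>u. c - u) holomorphic_on A"
    by (rule holomorphic_on_compose_gen[OF _ sig_hol]; auto intro!: holomorphic_intros)+
  then show "(\<lambda>u. \<sigma> (u + c)) holomorphic_on A" "(\<lambda>u. \<sigma> (c - u)) holomorphic_on A" by (simp_all add: o_def)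
qed

lemma r4_ex: "\<exists>r>0. \<forall>u\<in>ball 0 r. \<sigma> (u + v)/\<sigma> v \<in> ball 1 (1/2) \<and> \<sigma> (v - u)/\<sigma> v \<in> ball 1 (1/2)"
proof -
  have h1: "(\<lambda>u. \<sigma> (u + v)/\<sigma> v) holomorphic_on ball 0 1"
    using sv by (intro holomorphic_intros sig_shift_hol) auto
  have h2: "(\<lambda>u. \<sigma> (v - u)/\<sigma> v) holomorphic_on ball 0 1"
    using sv by (intro holomorphic_intros sig_shift_hol) auto
  obtain ra where ra: "ra > 0" "\<forall>u\<in>ball 0 ra. \<sigma> (u + v)/\<sigma> v \<in> ball 1 (1/2)"
    using isCont_ball[OF hol_isCont[OF h1] open_ball, of 1 "1/2"] sv by auto
  obtain rb where rb: "rb > 0" "\<forall>u\<in>ball 0 rb. \<sigma> (v - u)/\<sigma> v \<in> ball 1 (1/2)"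
    using isCont_ball[OF hol_isCont[OF h2] open_ball, of 1 "1/2"] sv by auto
  show ?thesis by (rule exI[of _ "min ra rb"]) (use ra rb in auto)
qed

definition "r4 = (SOME r. r > 0 \<and> (\<forall>u\<in>ball 0 r. \<sigma> (u + v)/\<sigma> v \<in> ball 1 (1/2) \<and> \<sigma> (v - u)/\<sigma> v \<in> ball 1 (1/2)))"
lemma r4: "r4 > 0" "u \<in> ball 0 r4 \<Longrightarrow> \<sigma> (u + v)/\<sigma> v \<in> ball 1 (1/2)" "u \<in> ball 0 r4 \<Longrightarrow> \<sigma> (v - u)/\<sigma> v \<in> ball 1 (1/2)"
  using someI_ex[OF r4_ex] unfolding r4_def[symmetric] by auto

abbreviation "E \<equiv> EE \<sigma> \<mu>1 v w"
abbreviation "Fv \<equiv> FF \<sigma> \<mu>1 v w"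
abbreviation "Pp \<equiv> PPv \<sigma> \<mu>1 v w"
abbreviation "Ss \<equiv> SSv \<sigma> \<mu>1 v w"
abbreviation "Dd \<equiv> DDv \<sigma> \<mu>1 v w"

lemma E_fun: "E = (\<lambda>u. exp (-(b1 * Ln (\<sigma> (u + v) / \<sigma> v) + b2 * Ln (\<sigma> (v - u) / \<sigma> v) + cc * u)))"
  by (rule ext) (simp add: EE_def)

lemma E_hol: "E holomorphic_on ball 0 r4"
proof -
  have "\<And>z. z \<in> ball 0 r4 \<Longrightarrow> \<sigma> (z + v) / \<sigma> v \<notin> \<real>\<^sub>\<le>\<^sub>0" "\<And>z. z \<in> ball 0 r4 \<Longrightarrow> \<sigma> (v - z) / \<sigma> v \<notin> \<real>\<^sub>\<le>\<^sub>0"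
    using r4 ball_half by blast+
  then show ?thesis unfolding E_fun using sv by (intro holomorphic_intros sig_shift_hol) auto
qed

lemma E_der:
  assumes u: "u \<in> ball 0 r4"
  shows "(E has_field_derivative E u * (-(b1 * Zt (u + v) - b2 * Zt (v - u) + cc))) (at u)"
proof -
  have B1: "\<sigma> (u + v)/\<sigma> v \<notin> \<real>\<^sub>\<le>\<^sub>0" "\<sigma> (u + v)/\<sigma> v \<noteq> 0" using r4(2)[OF u] ball_half by blast+
  have B2: "\<sigma> (v - u)/\<sigma> v \<notin> \<real>\<^sub>\<le>\<^sub>0" "\<sigma> (v - u)/\<sigma> v \<noteq> 0" using r4(3)[OF u] ball_half by blast+
  have ds: "(\<sigma> has_field_derivative deriv \<sigma> x) (at x)" for x using holomorphic_derivI[OF sig_hol] by auto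
  have dsp: "((\<lambda>x. \<sigma> (x + v)) has_field_derivative deriv \<sigma> (u + v)) (at u)" by (rule chain_p[OF ds])
  have dsm: "((\<lambda>x. \<sigma> (v - x)) has_field_derivative - deriv \<sigma> (v - u)) (at u)" by (rule chain_m[OF ds])
  have dL1: "((\<lambda>x. Ln (\<sigma> (x + v)/\<sigma> v)) has_field_derivative inverse (\<sigma> (u + v)/\<sigma> v) * (deriv \<sigma> (u + v) / \<sigma> v)) (at u)"
    by (rule DERIV_chain2[where g="\<lambda>x. \<sigma> (x + v)/\<sigma> v" and x=u, OF has_field_derivative_Ln[OF B1(1)]])
       (rule DERIV_cdivide[OF dsp])
  have dL2: "((\<lambda>x. Ln (\<sigma> (v - x)/\<sigma> v)) has_field_derivative inverse (\<sigma> (v - u)/\<sigma> v) * (- deriv \<sigma> (v - u) / \<sigma> v)) (at u)"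
    by (rule DERIV_chain2[where g="\<lambda>x. \<sigma> (v - x)/\<sigma> v" and x=u, OF has_field_derivative_Ln[OF B2(1)]])
       (rule DERIV_cdivide[OF dsm])
  have dg: "((\<lambda>x. -(b1 * Ln (\<sigma> (x + v) / \<sigma> v) + b2 * Ln (\<sigma> (v - x) / \<sigma> v) + cc * x)) has_field_derivative
      -(b1 * (inverse (\<sigma> (u + v)/\<sigma> v) * (deriv \<sigma> (u + v) / \<sigma> v)) + b2 * (inverse (\<sigma> (v - u)/\<sigma> v) * (- deriv \<sigma> (v - u) / \<sigma> v)) + cc * 1)) (at u)"
    by (rule DERIV_minus DERIV_add DERIV_cmult dL1 dL2 DERIV_ident)+
  have Z1: "inverse (\<sigma> (u + v)/\<sigma> v) * (deriv \<sigma> (u + v) / \<sigma> v) = Zt (u + v)"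
    using B1 sv by (simp add: wzeta_def field_simps)
  have Z2: "inverse (\<sigma> (v - u)/\<sigma> v) * (- deriv \<sigma> (v - u) / \<sigma> v) = - Zt (v - u)"
    using B2 sv by (simp add: wzeta_def field_simps)
  show ?thesis using DERIV_fun_exp[OF dg] unfolding Z1 Z2 E_fun by simp
qed

lemma Fv_fun: "Fv = (\<lambda>u. \<sigma> u * E u)" by (rule ext) (simp add: FF_def)
lemma Fv_hol: "Fv holomorphic_on ball 0 r4"
  unfolding Fv_fun by (intro holomorphic_intros E_hol holomorphic_on_subset[OF sig_hol]) auto
lemma Fv_der:
  assumes u: "u \<in> ball 0 r4"
  shows "(Fv has_field_derivative deriv \<sigma> u * E u + \<sigma> u * (E u * (-(b1 * Zt (u + v) - b2 * Zt (v - u) + cc)))) (at u)"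
proof -
  have ds: "(\<sigma> has_field_derivative deriv \<sigma> u) (at u)" using holomorphic_derivI[OF sig_hol] by auto
  show ?thesis unfolding Fv_fun using DERIV_mult[OF ds E_der[OF u]] by (simp add: algebra_simps)
qed

lemma E0: "E 0 = 1" using sv by (simp add: E_fun)
lemma Fv0: "Fv 0 = 0" by (simp add: FF_def sig0)
lemma dFv0: "deriv Fv 0 = 1"
proof -
  have "deriv Fv 0 = deriv \<sigma> 0 * E 0 + \<sigma> 0 * (E 0 * (-(b1 * Zt (0 + v) - b2 * Zt (v - 0) + cc)))"
    by (rule DERIV_imp_deriv[OF Fv_der]) (use r4(1) in simp)
  then show ?thesis by (simp add: dsig0 E0 sig0)
qed

lemma genBA:
  assumes u: "u \<in> ball 0 r4"
  shows "1 / gen_BA \<sigma> \<mu>1 v w u = Fv u"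
proof -
  have B1: "\<sigma> (u + v)/\<sigma> v \<noteq> 0" using r4(2)[OF u] ball_half by blast
  have B2: "\<sigma> (v - u)/\<sigma> v \<noteq> 0" using r4(3)[OF u] ball_half by blast
  define A where "A = b1 * Ln (\<sigma> (u + v) / \<sigma> v)"
  define B where "B = b2 * Ln (\<sigma> (v - u) / \<sigma> v)"
  define C where "C = cc * u"
  have "gen_BA \<sigma> \<mu>1 v w u = exp A * exp B / \<sigma> u * exp C"
    unfolding gen_BA_def Let_def powr_def A_def B_def C_def using B1 B2 by simp
  moreover have "Fv u = \<sigma> u * exp (-(A + B + C))"
    by (simp add: Fv_fun E_fun A_def B_def C_def)
  moreover have "1 / (exp A * exp B / \<sigma> u * exp C) = \<sigma> u * exp (-(A + B + C))"
  proof (cases "\<sigma> u = 0")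
    case True then show ?thesis by simp
  next
    case False
    have "exp A * (exp B * (exp C * exp (- A - (B + C)))) = 1" by (simp add: exp_add[symmetric])
    then show ?thesis using False by (simp add: field_simps)
  qed
  ultimately show ?thesis by simp
qed

lemma sig_P:
  assumes "\<sigma> u \<noteq> 0"
  shows "Pw u = ((deriv \<sigma> u)^2 - \<sigma> u * deriv (deriv \<sigma>) u)/(\<sigma> u)^2"
proof -
  have d1: "(\<sigma> has_field_derivative deriv \<sigma> u) (at u)" using holomorphic_derivI[OF sig_hol] by auto
  have d2: "(deriv \<sigma> has_field_derivative deriv (deriv \<sigma>) u) (at u)" using holomorphic_derivI[OF dsig_hol] by auto
  have "((\<lambda>x. deriv \<sigma> x / \<sigma> x) has_field_derivative (deriv (deriv \<sigma>) u * \<sigma> u - deriv \<sigma> u * deriv \<sigma> u) / (\<sigma> u * \<sigma> u)) (at u)"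
    using DERIV_divide[OF d2 d1 assms] by simp
  then have "deriv Zt u = (deriv (deriv \<sigma>) u * \<sigma> u - deriv \<sigma> u * deriv \<sigma> u) / (\<sigma> u * \<sigma> u)"
    unfolding Zt_eq by (rule DERIV_imp_deriv)
  then show ?thesis using assms by (simp add: wp_def field_simps power2_eq_square)
qed

end


lemma ppoly:
  fixes X Y a2 a6 g2 :: complex
  assumes "Y^2 = 4*(X+a2)^3 - g2*(X+a2) - (4*a2^3 - 2*a2*(g2/2) - a6)"
  shows "-3*Y^2 + 2*(6*(X+a2)^2 - g2/2)*X + 12*a2*X^2 - 4*(g2/2)*X + 24*a2^2*X + 3*a6 = 0"
  using assms by algebra

lemma dP_alg:
  fixes P Y F a1 a2 a3 a6 g2 :: complex
  assumes X: "P - a2 \<noteq> 0" and Fnz: "F \<noteq> 0" and c: "Y^2 = 4*P^3 - g2*P - (4*a2^3 - 2*a2*(g2/2) - a6)"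
  shows "F * (a1 - (Y + a3)/(2*(P - a2))) * ((Y + a3)/(2*(P - a2))) + F * (((6*P^2 - g2/2) * (P - a2) - (Y + a3) * Y)/(2*(P - a2)^2))
    = a1 * (F * ((Y + a3)/(2*(P - a2)))) - 2*a3 * (F * (F * (1/(F^2 * (P - a2)) * (F * ((Y + a3)/(2*(P - a2))))))) - 3*a2 * F
      + (g2/2 - 6*a2^2) * (F * (F * (F * (1/(F^2 * (P - a2)))))) - 90 * (a6 - a3^2) * (F^5/120 * (1/(F^2 * (P - a2)) * (1/(F^2 * (P - a2)))))"
proof -
  define X where "X = P - a2"
  have PX: "P = X + a2" by (simp add: X_def)
  have Xnz: "X \<noteq> 0" using X by (simp add: X_def)
  have c': "Y^2 = 4*(X+a2)^3 - g2*(X+a2) - (4*a2^3 - 2*a2*(g2/2) - a6)" using c unfolding PX .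
  have pz: "-3*Y^2 + 2*(6*(X+a2)^2 - g2/2)*X + 12*a2*X^2 - 4*(g2/2)*X + 24*a2^2*X + 3*a6 = 0"
    using c' by algebra
  have e: "F * (a1 - (Y + a3)/(2*X)) * ((Y + a3)/(2*X)) + F * (((6*(X + a2)^2 - g2/2) * X - (Y + a3) * Y)/(2*X^2))
        - (a1 * (F * ((Y + a3)/(2*X))) - 2*a3 * (F * (F * (1/(F^2 * X) * (F * ((Y + a3)/(2*X)))))) - 3*a2 * F
           + (g2/2 - 6*a2^2) * (F * (F * (F * (1/(F^2 * X))))) - 90 * (a6 - a3^2) * (F^5/120 * (1/(F^2 * X) * (1/(F^2 * X)))))
        = F * (-3*Y^2 + 2*(6*(X+a2)^2 - g2/2)*X + 12*a2*X^2 - 4*(g2/2)*X + 24*a2^2*X + 3*a6) / (4*X^2)"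
    using Xnz Fnz by (simp add: field_simps eval_nat_numeral)
  have "P - a2 = X" by (simp add: X_def)
  then show ?thesis using e pz unfolding PX by (simp add: X_def)
qed


lemma dS_alg:
  fixes F X Y a1 a3 :: complex
  assumes "X \<noteq> 0" "F \<noteq> 0"
  shows "-(2*F*(F * (a1 - (Y + a3)/(2*X)))*X + F^2*Y)/(F^2 * X)^2
     = -2*a1 * (1 / (F^2 * X)) + a3 * (F * (F * (1 / (F^2 * X) * (1 / (F^2 * X)))))"
  using assms by (simp add: field_simps power2_eq_square)

lemma dq4:
  fixes A X :: "complex \<Rightarrow> complex"
  assumes "(A has_field_derivative A') (at x)" "(X has_field_derivative X') (at x)" "A x \<noteq> 0" "X x \<noteq> 0"
  shows "((\<lambda>x. 1/((A x)^2 * X x)) has_field_derivative -(2*A x*A'*X x + (A x)^2*X')/((A x)^2 * X x)^2) (at x)"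
  using assms by (auto intro!: derivative_eq_intros simp: field_simps power2_eq_square)

lemma fact5: "fact 5 = (120::complex)" by (simp add: numeral_eq_Suc)

context inst begin

lemma Pp_fun: "Pp = (\<lambda>u. a1 * Fv u - deriv Fv u)" by (rule ext) (simp add: PPv_def)
lemma dFv_hol: "deriv Fv holomorphic_on ball 0 r4" by (intro holomorphic_deriv Fv_hol) auto
lemma Pp_hol: "Pp holomorphic_on ball 0 r4" unfolding Pp_fun by (intro holomorphic_intros Fv_hol dFv_hol)
lemma Fv_d: "u \<in> ball 0 r4 \<Longrightarrow> (Fv has_field_derivative deriv Fv u) (at u)"
  using holomorphic_derivI[OF Fv_hol] by auto
lemma Dd_fun: "Dd k = (\<lambda>u. (Fv u)^k / fact k)" by (rule ext) (simp add: DDv_def)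
lemma Dd_hol: "Dd k holomorphic_on ball 0 r4" unfolding Dd_fun by (intro holomorphic_intros Fv_hol) auto
lemma Dd_der: "u \<in> ball 0 r4 \<Longrightarrow> deriv (Dd (Suc k)) u = Dd k u * deriv Fv u"
proof -
  assume u: "u \<in> ball 0 r4"
  have d0: "((\<lambda>u. (Fv u)^(Suc k)) has_field_derivative of_nat (Suc k) * (deriv Fv u * (Fv u)^(Suc k - Suc 0))) (at u)"
    by (rule DERIV_power[OF Fv_d[OF u]])
  then have d: "((\<lambda>u. (Fv u)^(Suc k)) has_field_derivative of_nat (Suc k) * deriv Fv u * (Fv u)^k) (at u)"
    by (simp add: mult.assoc del: of_nat_Suc)
  have d2: "((\<lambda>u. (Fv u)^(Suc k) / fact (Suc k)) has_field_derivative of_nat (Suc k) * deriv Fv u * (Fv u)^k / fact (Suc k)) (at u)"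
    by (rule DERIV_cdivide[OF d])
  have fs: "(fact (Suc k)::complex) = of_nat (Suc k) * fact k" by (rule fact_Suc)
  have nz: "(of_nat (Suc k)::complex) \<noteq> 0" by (rule of_nat_neq_0)
  have nz2: "(fact k :: complex) \<noteq> 0" by simp
  have e: "of_nat (Suc k) * deriv Fv u * (Fv u)^k / fact (Suc k) = (Fv u)^k / fact k * deriv Fv u"
    unfolding fs using nz nz2 by (simp add: field_simps del: of_nat_Suc)
  show ?thesis unfolding Dd_fun using DERIV_imp_deriv[OF d2] e by simp
qed

lemma local_ode:
  "\<exists>R>0. R \<le> r4 \<and> Ss holomorphic_on ball 0 R \<and> (\<forall>u\<in>ball 0 R - {0}.
    deriv Ss u = -2*a1 * Ss u + a3 * (Fv u * (Fv u * (Ss u * Ss u))) \<and>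
    deriv Pp u = a1 * Pp u - 2*a3 * (Fv u * (Fv u * (Ss u * Pp u))) - 3*a2 * Fv u
       + (a4 - 6*a2^2) * (Fv u * (Fv u * (Fv u * Ss u))) - 90 * (a6 - a3^2) * (Dd 5 u * (Ss u * Ss u)))"
proof -
  obtain rK where rK: "rK > 0" "\<forall>u\<in>ball 0 rK - {0}. Zt u - b1 * Zt (u + v) + b2 * Zt (v - u) - cc = a1 - (Pw1 u + a3)/(2*(Pw u - a2))"
    using Kid by blast
  define Den where "Den = (\<lambda>u. (E u)^2 * ((deriv \<sigma> u)^2 - \<sigma> u * deriv (deriv \<sigma>) u - a2 * (\<sigma> u)^2))"
  have ddsig: "deriv (deriv \<sigma>) holomorphic_on UNIV" by (intro holomorphic_deriv dsig_hol) auto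
  have Den_hol: "Den holomorphic_on ball 0 r4"
    unfolding Den_def by (intro holomorphic_intros E_hol holomorphic_on_subset[OF dsig_hol]
        holomorphic_on_subset[OF sig_hol] holomorphic_on_subset[OF ddsig]) auto
  have "Den 0 \<noteq> 0" by (simp add: Den_def E0 sig0 dsig0)
  then obtain r5 where r5: "r5 > 0" "\<forall>u\<in>ball 0 r5. Den u \<noteq> 0"
    using isCont_nz[OF hol_isCont[OF Den_hol r4(1)]] by blast
  define R where "R = min rK (min r5 (min r1 r4))"
  have R: "R > 0" "R \<le> r4" using rK r5 r1 r4 by (auto simp: R_def)
  have sub: "ball 0 R \<subseteq> ball 0 rK" "ball 0 R \<subseteq> ball 0 r5" "ball 0 R \<subseteq> ball 0 r1"
    "ball 0 R \<subseteq> ball 0 r4" "ball 0 R \<subseteq> ball 0 r0"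
    using r1(2) by (auto simp: R_def)
  have Ss_fun: "Ss = (\<lambda>u. 1 / Den u)" by (rule ext) (simp add: SSv_def Den_def)
  have Dnz: "Den u \<noteq> 0" if "u \<in> ball 0 R" for u using r5(2) sub(2) that by blast
  have Ss_hol: "Ss holomorphic_on ball 0 R"
    unfolding Ss_fun using Dnz holomorphic_on_subset[OF Den_hol sub(4)]
    by (intro holomorphic_intros) auto
  define Phi where "Phi = (\<lambda>u. a1 - (Pw1 u + a3)/(2*(Pw u - a2)))"
  have F: "\<sigma> u \<noteq> 0" "Pw1 u \<noteq> 0" "deriv Pw1 u = 6*(Pw u)^2 - g2/2" "Fv u \<noteq> 0" "Pw u - a2 \<noteq> 0"
    "Den u = (Fv u)^2 * (Pw u - a2)" "deriv Fv u = Fv u * Phi u" "Ss u = 1 / ((Fv u)^2 * (Pw u - a2))"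
    "Pp u = Fv u * ((Pw1 u + a3)/(2*(Pw u - a2)))" "u \<in> ball 0 r4"
    if "u \<in> ball 0 R - {0}" for u
  proof -
    have x: "u \<in> ball 0 r0" "u \<in> ball 0 r1" "u \<noteq> 0" "u \<in> ball 0 r4" "u \<in> ball 0 rK - {0}" "u \<in> ball 0 r5"
      using that sub by blast+
    have s0: "\<sigma> u \<noteq> 0" using sig_nz x by blast
    have P': "(deriv \<sigma> u)^2 = \<sigma> u * deriv (deriv \<sigma>) u + (\<sigma> u)^2 * Pw u"
      using sig_P[OF s0] s0 by (simp add: field_simps)
    have Dn: "Den u = (Fv u)^2 * (Pw u - a2)"
      unfolding Den_def Fv_fun P' by (simp add: algebra_simps power2_eq_square)
    have Dnz: "Den u \<noteq> 0" using r5 x by blast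
    have dF: "deriv Fv u = Fv u * Phi u"
    proof -
      have "deriv Fv u = deriv \<sigma> u * E u + \<sigma> u * (E u * (-(b1 * Zt (u + v) - b2 * Zt (v - u) + cc)))"
        by (rule DERIV_imp_deriv[OF Fv_der[OF x(4)]])
      also have "\<dots> = Fv u * (Zt u - b1 * Zt (u + v) + b2 * Zt (v - u) - cc)"
        using s0 by (simp add: Fv_fun wzeta_def field_simps)
      also have "\<dots> = Fv u * Phi u" using rK(2) x by (simp add: Phi_def)
      finally show ?thesis .
    qed
    show "\<sigma> u \<noteq> 0" by (rule s0)
    show "Pw1 u \<noteq> 0" using Pw1_nz x by blast
    show "deriv Pw1 u = 6*(Pw u)^2 - g2/2" using ode2_near x by blast
    show "Fv u \<noteq> 0" using Dn Dnz by auto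
    show "Pw u - a2 \<noteq> 0" using Dn Dnz by auto
    show "Den u = (Fv u)^2 * (Pw u - a2)" by (rule Dn)
    show "deriv Fv u = Fv u * Phi u" by (rule dF)
    show "Ss u = 1 / ((Fv u)^2 * (Pw u - a2))" using Dn by (simp add: Ss_fun)
    show "Pp u = Fv u * ((Pw1 u + a3)/(2*(Pw u - a2)))" using dF by (simp add: Pp_fun Phi_def algebra_simps)
    show "u \<in> ball 0 r4" by (rule x(4))
  qed
  have pb: "open (ball (0::complex) R - {0})" by (rule pball_open)
  have dS: "deriv Ss u = -2*a1 * Ss u + a3 * (Fv u * (Fv u * (Ss u * Ss u)))" if u: "u \<in> ball 0 R - {0}" for u
  proof -
    note f = F[OF u]
    have "deriv Ss u = deriv (\<lambda>x. 1 / ((Fv x)^2 * (Pw x - a2))) u"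
      by (rule deriv_on_open[OF pb u]) (use F in auto)
    also have "\<dots> = -(2*Fv u*(Fv u * Phi u)*(Pw u - a2) + (Fv u)^2*Pw1 u)/((Fv u)^2 * (Pw u - a2))^2"
    proof (rule DERIV_imp_deriv, rule dq4)
      show "(Fv has_field_derivative Fv u * Phi u) (at u)" using Fv_d[OF f(10)] f(7) by simp
      show "((\<lambda>x. Pw x - a2) has_field_derivative Pw1 u) (at u)" using Pw_der[OF f(1)] by (auto intro!: derivative_eq_intros)
    qed (use f in auto)
    also have "\<dots> = -2*a1 * Ss u + a3 * (Fv u * (Fv u * (Ss u * Ss u)))"
      unfolding f(8) Phi_def by (rule dS_alg[OF f(5) f(4)])
    finally show ?thesis .
  qed
  have dP: "deriv Pp u = a1 * Pp u - 2*a3 * (Fv u * (Fv u * (Ss u * Pp u))) - 3*a2 * Fv u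
       + (a4 - 6*a2^2) * (Fv u * (Fv u * (Fv u * Ss u))) - 90 * (a6 - a3^2) * (Dd 5 u * (Ss u * Ss u))"
    if u: "u \<in> ball 0 R - {0}" for u
  proof -
    note f = F[OF u]
    have "deriv Pp u = deriv (\<lambda>x. Fv x * ((Pw1 x + a3)/(2*(Pw x - a2)))) u"
      by (rule deriv_on_open[OF pb u]) (use F in auto)
    also have "\<dots> = Fv u * Phi u * ((Pw1 u + a3)/(2*(Pw u - a2)))
        + Fv u * (((6*(Pw u)^2 - g2/2) * (Pw u - a2) - (Pw1 u + a3) * Pw1 u)/(2*(Pw u - a2)^2))"
    proof (rule DERIV_imp_deriv)
      have dA: "((\<lambda>x. Pw1 x + a3) has_field_derivative 6*(Pw u)^2 - g2/2) (at u)"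
        using Pw1_der[OF f(1)] f(3) by (auto intro!: derivative_eq_intros)
      have dX: "((\<lambda>x. Pw x - a2) has_field_derivative Pw1 u) (at u)"
        using Pw_der[OF f(1)] by (auto intro!: derivative_eq_intros)
      have dF': "(Fv has_field_derivative Fv u * Phi u) (at u)" using Fv_d[OF f(10)] f(7) by simp
      show "((\<lambda>x. Fv x * ((Pw1 x + a3)/(2*(Pw x - a2)))) has_field_derivative
        Fv u * Phi u * ((Pw1 u + a3)/(2*(Pw u - a2)))
        + Fv u * (((6*(Pw u)^2 - g2/2) * (Pw u - a2) - (Pw1 u + a3) * Pw1 u)/(2*(Pw u - a2)^2))) (at u)"
        by (rule DERIV_cong[OF DERIV_mult[OF dF' dq3[OF dA dX f(5)]]]) (simp add: algebra_simps)
    qed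
    also have "\<dots> = a1 * Pp u - 2*a3 * (Fv u * (Fv u * (Ss u * Pp u))) - 3*a2 * Fv u
       + (a4 - 6*a2^2) * (Fv u * (Fv u * (Fv u * Ss u))) - 90 * (a6 - a3^2) * (Dd 5 u * (Ss u * Ss u))"
    proof -
      have c: "(Pw1 u)^2 = 4*(Pw u)^3 - g2*(Pw u) - (4*a2^3 - 2*a2*(g2/2) - a6)"
        using sig_curve[OF f(1)] g3_eq by simp
      have D5: "Dd 5 u = (Fv u)^5/120" by (simp add: Dd_fun fact5)
      show ?thesis unfolding f(8) f(9) D5 Phi_def by (rule dP_alg[OF f(5) f(4) c])
    qed
    finally show ?thesis .
  qed
  show ?thesis using R Ss_hol dS dP by blast
qed

end


type_synonym inst_t = "complex \<times> complex \<times> complex \<times> complex \<times> complex \<times> (complex \<Rightarrow> complex) \<times> complex \<times> complex"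

definition Inst :: "inst_t \<Rightarrow> bool" where
  "Inst \<iota> = (case \<iota> of (\<mu>1,\<mu>2,\<mu>3,\<mu>4,\<mu>6,\<sigma>,v,w) \<Rightarrow> inst \<mu>1 \<mu>2 \<mu>3 \<mu>4 \<mu>6 \<sigma> v w)"
definition Aof :: "inst_t \<Rightarrow> cv" where
  "Aof \<iota> = (case \<iota> of (\<mu>1,\<mu>2,\<mu>3,\<mu>4,\<mu>6,\<sigma>,v,w) \<Rightarrow>
     (\<mu>1/2, wp \<sigma> v, deriv (wp \<sigma>) w, inv_g2 \<mu>1 \<mu>2 \<mu>3 \<mu>4 / 2, 4*\<mu>6 + \<mu>3^2))"
definition Yof :: "inst_t \<Rightarrow> nat \<Rightarrow> complex \<Rightarrow> complex" where
  "Yof \<iota> i = (case \<iota> of (\<mu>1,\<mu>2,\<mu>3,\<mu>4,\<mu>6,\<sigma>,v,w) \<Rightarrow>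
     (if i = 0 then FF \<sigma> \<mu>1 v w else if i = 1 then SSv \<sigma> \<mu>1 v w else if i = 2 then PPv \<sigma> \<mu>1 v w
      else if i \<le> 6 then DDv \<sigma> \<mu>1 v w (i - 1) else (\<lambda>_. 0)))"

definition E0x :: ex where "E0x = Pl (Ml (Cs (\<lambda>x. fst x)) (Vr 0)) (Ml (Cs (\<lambda>x. -1)) (Vr 2))"
definition E1x :: ex where
  "E1x = Pl (Ml (Cs (\<lambda>x. -2 * fst x)) (Vr 1)) (Ml (Cs (\<lambda>x. fst (snd (snd x)))) (Ml (Vr 0) (Ml (Vr 0) (Ml (Vr 1) (Vr 1)))))"
definition E2x :: ex where
  "E2x = Pl (Ml (Cs (\<lambda>x. fst x)) (Vr 2))
     (Pl (Ml (Cs (\<lambda>x. -2 * fst (snd (snd x)))) (Ml (Vr 0) (Ml (Vr 0) (Ml (Vr 1) (Vr 2)))))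
     (Pl (Ml (Cs (\<lambda>x. -3 * fst (snd x))) (Vr 0))
     (Pl (Ml (Cs (\<lambda>x. fst (snd (snd (snd x))) - 6 * (fst (snd x))^2)) (Ml (Vr 0) (Ml (Vr 0) (Ml (Vr 0) (Vr 1)))))
         (Ml (Cs (\<lambda>x. -90 * (snd (snd (snd (snd x))) - (fst (snd (snd x)))^2))) (Ml (Vr 6) (Ml (Vr 1) (Vr 1)))))))"
definition Eof :: "nat \<Rightarrow> ex" where
  "Eof i = (if i = 0 then E0x else if i = 1 then E1x else if i = 2 then E2x
     else if i \<le> 6 then Ml (Vr (if i = 3 then 0 else i - 1)) E0x else Cs (\<lambda>x. 0))"

lemma zpm: "zp P \<Longrightarrow> zp (\<lambda>x. of_int k * P x)" by (rule zp_cmult)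

lemma okx_Eof: "okx (Eof i)"
proof -
  have a: "zp (\<lambda>x. -1)" using zp_const[of "-1"] by simp
  have b: "zp (\<lambda>x. -2 * fst x)" using zp_cmult[OF zp_x1, of "-2"] by simp
  have c: "zp (\<lambda>x. -2 * fst (snd (snd x)))" using zp_cmult[OF zp_x3, of "-2"] by simp
  have d: "zp (\<lambda>x. -3 * fst (snd x))" using zp_cmult[OF zp_x2, of "-3"] by simp
  have e: "zp (\<lambda>x. fst (snd (snd (snd x))) - 6 * (fst (snd x))^2)"
    using zp_diff[OF zp_x4 zp_cmult[OF zp_mult[OF zp_x2 zp_x2], of 6]] by (simp add: power2_eq_square)
  have f: "zp (\<lambda>x. -90 * (snd (snd (snd (snd x))) - (fst (snd (snd x)))^2))"
    using zp_cmult[OF zp_diff[OF zp_x6 zp_mult[OF zp_x3 zp_x3]], of "-90"] by (simp add: power2_eq_square)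
  have E0: "okx E0x" using zp_x1 a by (simp add: E0x_def)
  show ?thesis using E0 a b c d e f zp_x1 zp_x3 zp_zero
    by (auto simp: Eof_def E1x_def E2x_def)
qed

lemma loc:
  assumes "Inst \<iota>"
  shows "\<exists>r>0. (\<forall>i. Yof \<iota> i holomorphic_on ball 0 r) \<and>
           (\<forall>i. \<forall>z\<in>ball 0 r - {0}. deriv (Yof \<iota> i) z = ev (Eof i) (Yof \<iota>) (Aof \<iota>) z)"
proof -
  obtain \<mu>1 \<mu>2 \<mu>3 \<mu>4 \<mu>6 \<sigma> v w where \<iota>: "\<iota> = (\<mu>1,\<mu>2,\<mu>3,\<mu>4,\<mu>6,\<sigma>,v,w)" by (cases \<iota>) auto
  interpret inst \<mu>1 \<mu>2 \<mu>3 \<mu>4 \<mu>6 \<sigma> v w using assms by (simp add: Inst_def \<iota>)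
  obtain R where R: "R > 0" "R \<le> r4" "Ss holomorphic_on ball 0 R"
    "\<forall>u\<in>ball 0 R - {0}. deriv Ss u = -2*a1 * Ss u + a3 * (Fv u * (Fv u * (Ss u * Ss u))) \<and>
    deriv Pp u = a1 * Pp u - 2*a3 * (Fv u * (Fv u * (Ss u * Pp u))) - 3*a2 * Fv u
       + (a4 - 6*a2^2) * (Fv u * (Fv u * (Fv u * Ss u))) - 90 * (a6 - a3^2) * (Dd 5 u * (Ss u * Ss u))"
    using local_ode by blast
  have sub: "ball 0 R \<subseteq> ball 0 r4" using R(2) by auto
  have Y: "Yof \<iota> 0 = Fv" "Yof \<iota> 1 = Ss" "Yof \<iota> 2 = Pp" "Yof \<iota> 3 = Dd 2" "Yof \<iota> 4 = Dd 3"
    "Yof \<iota> 5 = Dd 4" "Yof \<iota> 6 = Dd 5" "i > 6 \<Longrightarrow> Yof \<iota> i = (\<lambda>_. 0)" "Yof \<iota> (Suc 0) = Ss"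
    "Yof \<iota> (Suc (Suc 0)) = Pp" "Yof \<iota> (Suc (Suc (Suc 0))) = Dd 2" "Yof \<iota> (Suc (Suc (Suc (Suc 0)))) = Dd 3"
    "Yof \<iota> (Suc (Suc (Suc (Suc (Suc 0))))) = Dd 4" "Yof \<iota> (Suc (Suc (Suc (Suc (Suc (Suc 0)))))) = Dd 5" for i
    by (simp_all add: Yof_def \<iota> eval_nat_numeral)
  have A: "Aof \<iota> = (a1, a2, a3, a4, a6)" by (simp add: Aof_def \<iota>)
  have hol: "Yof \<iota> i holomorphic_on ball 0 R" for i
  proof -
    have "i = 0 \<or> i = 1 \<or> i = 2 \<or> i = 3 \<or> i = 4 \<or> i = 5 \<or> i = 6 \<or> i > 6" by linarith
    then show ?thesis
      using holomorphic_on_subset[OF Fv_hol sub] R(3) holomorphic_on_subset[OF Pp_hol sub]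
        holomorphic_on_subset[OF Dd_hol sub]
      by (elim disjE) (simp_all add: Y)
  qed
  have dF: "deriv Fv z = a1 * Fv z - Pp z" for z by (simp add: Pp_fun)
  have ode: "deriv (Yof \<iota> i) z = ev (Eof i) (Yof \<iota>) (Aof \<iota>) z" if z: "z \<in> ball 0 R - {0}" for i z
  proof -
    have z4: "z \<in> ball 0 r4" using z sub by blast
    have Dd1: "Dd 1 z = Fv z" by (simp add: Dd_fun)
    consider "i = 0" | "i = 1" | "i = 2" | "i = 3" | "i = 4" | "i = 5" | "i = 6" | "i > 6" by linarith
    then show ?thesis
    proof cases
      case 1 then show ?thesis by (simp add: Y A Eof_def E0x_def dF)
    next
      case 2 then show ?thesis using R(4) z by (simp add: Y A Eof_def E1x_def algebra_simps)
    next
      case 3 then show ?thesis using R(4) z by (simp add: Y A Eof_def E2x_def algebra_simps)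
    next
      case 4 then show ?thesis using Dd_der[OF z4, of 1] Dd1 by (simp add: Y A Eof_def E0x_def dF numeral_2_eq_2)
    next
      case 5 then show ?thesis using Dd_der[OF z4, of 2] by (simp add: Y A Eof_def E0x_def dF numeral_3_eq_3 numeral_2_eq_2)
    next
      case 6 then show ?thesis using Dd_der[OF z4, of 3] by (simp add: Y A Eof_def E0x_def dF eval_nat_numeral)
    next
      case 7 then show ?thesis using Dd_der[OF z4, of 4] by (simp add: Y A Eof_def E0x_def dF eval_nat_numeral)
    next
      case 8 then show ?thesis by (simp add: Y A Eof_def)
    qed
  qed
  show ?thesis using R(1) hol ode by blast
qed

lemma init: "\<exists>P. zp P \<and> (\<forall>\<iota>. Inst \<iota> \<longrightarrow> Yof \<iota> i 0 = P (Aof \<iota>))"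
proof -
  have v: "Yof \<iota> i 0 = (if i = 1 then 1 else if i = 2 then -1 else 0)" if "Inst \<iota>" for \<iota>
  proof -
    obtain \<mu>1 \<mu>2 \<mu>3 \<mu>4 \<mu>6 \<sigma> v w where \<iota>: "\<iota> = (\<mu>1,\<mu>2,\<mu>3,\<mu>4,\<mu>6,\<sigma>,v,w)" by (cases \<iota>) auto
    interpret inst \<mu>1 \<mu>2 \<mu>3 \<mu>4 \<mu>6 \<sigma> v w using that by (simp add: Inst_def \<iota>)
    have S0: "Ss 0 = 1" by (simp add: SSv_def E0 sig0 dsig0)
    have P0: "Pp 0 = -1" by (simp add: Pp_fun Fv0 dFv0)
    have D0: "k \<ge> 2 \<Longrightarrow> Dd k 0 = 0" for k by (simp add: Dd_fun Fv0)
    show ?thesis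
      by (cases "i \<le> 6") (auto simp: Yof_def \<iota> Fv0 S0 P0 D0)
  qed
  show ?thesis
  proof (intro exI[of _ "\<lambda>x. of_int (if i = 1 then 1 else if i = 2 then -1 else 0)"] conjI allI impI)
    show "zp (\<lambda>x. of_int (if i = 1 then 1 else if i = 2 then -1 else 0))" by (rule zp_const)
    fix \<iota> assume "Inst \<iota>" then show "Yof \<iota> i 0 = of_int (if i = 1 then 1 else if i = 2 then -1 else 0)"
      using v by simp
  qed
qed

theorem mainTheorem18:
  shows "\<forall>k::nat. k \<ge> 1 \<longrightarrow>
    (\<exists>(S::(nat\<times>nat\<times>nat\<times>nat\<times>nat) set) (c::nat\<times>nat\<times>nat\<times>nat\<times>nat \<Rightarrow> int). finite S \<and>
      (\<forall>(\<mu>1::complex) \<mu>2 \<mu>3 \<mu>4 \<mu>6 (\<sigma>::complex \<Rightarrow> complex) v w.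
         (inv_g2 \<mu>1 \<mu>2 \<mu>3 \<mu>4)^3 - 27 * (inv_g3 \<mu>1 \<mu>2 \<mu>3 \<mu>4 \<mu>6)^2 \<noteq> 0 \<and>
         weierstrass_sigma (inv_g2 \<mu>1 \<mu>2 \<mu>3 \<mu>4) (inv_g3 \<mu>1 \<mu>2 \<mu>3 \<mu>4 \<mu>6) \<sigma> \<and>
         \<sigma> v \<noteq> 0 \<and> \<sigma> w \<noteq> 0 \<and>
         wp \<sigma> v = (4*\<mu>2 + \<mu>1^2) / 12 \<and>
         deriv (wp \<sigma>) w = - \<mu>3 \<and>
         deriv (wp \<sigma>) v \<noteq> 0
       \<longrightarrow> BA_coeff \<sigma> \<mu>1 v w k =
             zpoly5_eval S c (\<mu>1 / 2) (wp \<sigma> v) (deriv (wp \<sigma>) w)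
               (inv_g2 \<mu>1 \<mu>2 \<mu>3 \<mu>4 / 2) (4*\<mu>6 + \<mu>3^2)))"
proof (intro allI impI)
  fix k :: nat assume "k \<ge> 1"
  have "\<exists>P. zp P \<and> (\<forall>\<iota>. Inst \<iota> \<longrightarrow> (deriv^^(k+1)) (Yof \<iota> 0) 0 = P (Aof \<iota>))"
    by (rule sys_int[where E=Eof and Inst=Inst and Y=Yof and A=Aof, OF okx_Eof loc init])
  then obtain P where P: "zp P" "\<forall>\<iota>. Inst \<iota> \<longrightarrow> (deriv^^(k+1)) (Yof \<iota> 0) 0 = P (Aof \<iota>)" by blast
  obtain S c where Sc: "finite S" "\<And>x. P x = (\<Sum>e\<in>S. of_int (c e) * mon e x)"
    using P(1) unfolding zp_def by blast
  show "\<exists>(S::(nat\<times>nat\<times>nat\<times>nat\<times>nat) set) (c::nat\<times>nat\<times>nat\<times>nat\<times>nat \<Rightarrow> int). finite S \<and>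
      (\<forall>(\<mu>1::complex) \<mu>2 \<mu>3 \<mu>4 \<mu>6 (\<sigma>::complex \<Rightarrow> complex) v w.
         (inv_g2 \<mu>1 \<mu>2 \<mu>3 \<mu>4)^3 - 27 * (inv_g3 \<mu>1 \<mu>2 \<mu>3 \<mu>4 \<mu>6)^2 \<noteq> 0 \<and>
         weierstrass_sigma (inv_g2 \<mu>1 \<mu>2 \<mu>3 \<mu>4) (inv_g3 \<mu>1 \<mu>2 \<mu>3 \<mu>4 \<mu>6) \<sigma> \<and>
         \<sigma> v \<noteq> 0 \<and> \<sigma> w \<noteq> 0 \<and>
         wp \<sigma> v = (4*\<mu>2 + \<mu>1^2) / 12 \<and>
         deriv (wp \<sigma>) w = - \<mu>3 \<and>
         deriv (wp \<sigma>) v \<noteq> 0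
       \<longrightarrow> BA_coeff \<sigma> \<mu>1 v w k =
             zpoly5_eval S c (\<mu>1 / 2) (wp \<sigma> v) (deriv (wp \<sigma>) w)
               (inv_g2 \<mu>1 \<mu>2 \<mu>3 \<mu>4 / 2) (4*\<mu>6 + \<mu>3^2))"
  proof (intro exI[of _ S] exI[of _ c] conjI allI impI)
    show "finite S" by (rule Sc(1))
    fix \<mu>1 \<mu>2 \<mu>3 \<mu>4 \<mu>6 :: complex and \<sigma> :: "complex \<Rightarrow> complex" and v w :: complex
    assume H: "(inv_g2 \<mu>1 \<mu>2 \<mu>3 \<mu>4)^3 - 27 * (inv_g3 \<mu>1 \<mu>2 \<mu>3 \<mu>4 \<mu>6)^2 \<noteq> 0 \<and>
         weierstrass_sigma (inv_g2 \<mu>1 \<mu>2 \<mu>3 \<mu>4) (inv_g3 \<mu>1 \<mu>2 \<mu>3 \<mu>4 \<mu>6) \<sigma> \<and>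
         \<sigma> v \<noteq> 0 \<and> \<sigma> w \<noteq> 0 \<and>
         wp \<sigma> v = (4*\<mu>2 + \<mu>1^2) / 12 \<and>
         deriv (wp \<sigma>) w = - \<mu>3 \<and>
         deriv (wp \<sigma>) v \<noteq> 0"
    have I: "inst \<mu>1 \<mu>2 \<mu>3 \<mu>4 \<mu>6 \<sigma> v w" unfolding inst_def using H by blast
    interpret inst \<mu>1 \<mu>2 \<mu>3 \<mu>4 \<mu>6 \<sigma> v w by (rule I)
    have "BA_coeff \<sigma> \<mu>1 v w k = (deriv^^(k+1)) Fv 0"
      unfolding BA_coeff_def
    proof (rule higher_deriv_cong_ev[OF _ refl])
      show "\<forall>\<^sub>F x in nhds 0. 1 / gen_BA \<sigma> \<mu>1 v w x = Fv x"
        using genBA r4(1) by (auto simp: eventually_nhds intro!: exI[of _ "ball 0 r4"])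
    qed
    also have "\<dots> = P (Aof (\<mu>1,\<mu>2,\<mu>3,\<mu>4,\<mu>6,\<sigma>,v,w))"
      using P(2) I by (simp add: Inst_def Yof_def)
    also have "\<dots> = zpoly5_eval S c (\<mu>1 / 2) (wp \<sigma> v) (deriv (wp \<sigma>) w) (inv_g2 \<mu>1 \<mu>2 \<mu>3 \<mu>4 / 2) (4*\<mu>6 + \<mu>3^2)"
      by (simp add: Aof_def Sc(2) zpoly5_eval_alt)
    finally show "BA_coeff \<sigma> \<mu>1 v w k = zpoly5_eval S c (\<mu>1 / 2) (wp \<sigma> v) (deriv (wp \<sigma>) w) (inv_g2 \<mu>1 \<mu>2 \<mu>3 \<mu>4 / 2) (4*\<mu>6 + \<mu>3^2)" .
  qed
qed


end
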